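(* Let $\mathcal{C}$ be a non-splitting CSS code on $n$ qubits of distance greater than $2$. Suppose there is some $k$ such that no $1$-local circuit in $\mathcal{C}_n^k\setminus\mathcal{C}_n^{k-1}$ is a logical identity of $\mathcal{C}$. Then for all $m\geq k$, no $1$-local circuit in $\mathcal{C}_n^m\setminus\mathcal{C}_n^{k-1}$ is a logical identity of $\mathcal{C}$.
   Context: The Clifford hierarchy: $\mathcal{C}_n^1=\mathcal{P}_n$ is the $n$-qubit Pauli group and, for $k>1$, $\mathcal{C}_n^k=\{U\in\mathcal{U}(2^n): U\mathcal{P}_nU^\dagger\subseteq\mathcal{C}_n^{k-1}\}$. A $1$-local circuit is a tensor product $C_1\otimes\cdots\otimes C_n$ of single-qubit gates. A CSS code $\mathsf{CSS}(A,B)$ on $n$ qubits is given by subspaces $A,B\subseteq\mathbb{F}_2^n$ with $a\cdot b=0$ for all $a\in A,b\in B$; its codespace is the common $+1$-eigenspace of $X^a$ ($a\in A$) and $Z^b$ ($b\in B$), where $G^a=\bigotimes_{i:a_i=1}G_i$. A logical identity is an operator acting as the identity on the codespace. A subspace $A$ splits on a non-empty $h\subsetneq\{1,\dots,n\}$ if $A=A_1\oplus A_2$ with $A_1$ having support $h$ and $A_2$ supported on the complement of $h$; the code splits on $h$ if both $A$ and $B$ do, and is non-splitting if it splits on no such $h$. *)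

theory Defs
  imports Complex_Main "Jordan_Normal_Form.Matrix"
begin

text \<open>A vector of F_2^n is represented by its support, a subset of {0..<n}
  (qubits are numbered 0..n-1); addition is symmetric difference.\<close>

definition f2_add :: "nat set \<Rightarrow> nat set \<Rightarrow> nat set" where
  "f2_add a b = (a - b) \<union> (b - a)"

definition f2_dot_zero :: "nat set \<Rightarrow> nat set \<Rightarrow> bool" where
  "f2_dot_zero a b \<longleftrightarrow> even (card (a \<inter> b))"

definition f2_subspace :: "nat \<Rightarrow> nat set set \<Rightarrow> bool" where
  "f2_subspace n A \<longleftrightarrow> A \<subseteq> Pow {0..<n} \<and> {} \<in> A \<and> (\<forall>a\<in>A. \<forall>b\<in>A. f2_add a b \<in> A)"

definition f2_perp :: "nat \<Rightarrow> nat set set \<Rightarrow> nat set set" where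
  "f2_perp n A = {x. x \<subseteq> {0..<n} \<and> (\<forall>a\<in>A. f2_dot_zero x a)}"

definition is_CSS :: "nat \<Rightarrow> nat set set \<Rightarrow> nat set set \<Rightarrow> bool" where
  "is_CSS n A B \<longleftrightarrow> f2_subspace n A \<and> f2_subspace n B \<and> (\<forall>a\<in>A. \<forall>b\<in>B. f2_dot_zero a b)"

text \<open>Distance of CSS(A,B) greater than d: every nontrivial logical X-type operator
  (x in B-perp minus A) and every nontrivial logical Z-type operator (z in A-perp minus B)
  has weight greater than d (distance is infinite if there are none).\<close>

definition css_distance_gt :: "nat \<Rightarrow> nat set set \<Rightarrow> nat set set \<Rightarrow> nat \<Rightarrow> bool" where
  "css_distance_gt n A B d \<longleftrightarrow>
     (\<forall>x \<in> f2_perp n B - A. card x > d) \<and> (\<forall>z \<in> f2_perp n A - B. card z > d)"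

definition subspace_splits :: "nat \<Rightarrow> nat set set \<Rightarrow> nat set \<Rightarrow> bool" where
  "subspace_splits n A h \<longleftrightarrow>
     (\<exists>A1 A2. f2_subspace n A1 \<and> f2_subspace n A2 \<and>
        (\<forall>a\<in>A1. a \<subseteq> h) \<and> (\<forall>a\<in>A2. a \<subseteq> {0..<n} - h) \<and>
        A = {f2_add a1 a2 | a1 a2. a1 \<in> A1 \<and> a2 \<in> A2})"

definition css_splits :: "nat \<Rightarrow> nat set set \<Rightarrow> nat set set \<Rightarrow> nat set \<Rightarrow> bool" where
  "css_splits n A B h \<longleftrightarrow> subspace_splits n A h \<and> subspace_splits n B h"

definition css_non_splitting :: "nat \<Rightarrow> nat set set \<Rightarrow> nat set set \<Rightarrow> bool" where
  "css_non_splitting n A B \<longleftrightarrow>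
     (\<forall>h. h \<noteq> {} \<and> h \<subset> {0..<n} \<longrightarrow> \<not> css_splits n A B h)"

text \<open>Computational basis states of n qubits are indexed by 0..<2^n; qubit i of basis
  index x is bit i of x.\<close>

definition qbit :: "nat \<Rightarrow> nat \<Rightarrow> nat" where
  "qbit x i = (x div 2 ^ i) mod 2"

definition tensor :: "nat \<Rightarrow> (nat \<Rightarrow> complex mat) \<Rightarrow> complex mat" where
  "tensor n C = mat (2 ^ n) (2 ^ n) (\<lambda>(x, y). \<Prod>i<n. C i $$ (qbit x i, qbit y i))"

definition adj :: "complex mat \<Rightarrow> complex mat" where
  "adj A = mat (dim_col A) (dim_row A) (\<lambda>(i, j). cnj (A $$ (j, i)))"

definition unitary_mat :: "nat \<Rightarrow> complex mat \<Rightarrow> bool" where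
  "unitary_mat N U \<longleftrightarrow> U \<in> carrier_mat N N \<and> U * adj U = 1\<^sub>m N \<and> adj U * U = 1\<^sub>m N"

definition pauli_X :: "complex mat" where
  "pauli_X = mat 2 2 (\<lambda>(i, j). if i \<noteq> j then 1 else 0)"

definition pauli_Z :: "complex mat" where
  "pauli_Z = mat 2 2 (\<lambda>(i, j). if i = j then (if i = 0 then 1 else -1) else 0)"

definition Xpow :: "nat \<Rightarrow> nat set \<Rightarrow> complex mat" where
  "Xpow n a = tensor n (\<lambda>i. if i \<in> a then pauli_X else 1\<^sub>m 2)"

definition Zpow :: "nat \<Rightarrow> nat set \<Rightarrow> complex mat" where
  "Zpow n b = tensor n (\<lambda>i. if i \<in> b then pauli_Z else 1\<^sub>m 2)"

definition pauli_group :: "nat \<Rightarrow> complex mat set" where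
  "pauli_group n = {(\<i> ^ c) \<cdot>\<^sub>m (Xpow n a * Zpow n b) | c a b.
                      a \<subseteq> {0..<n} \<and> b \<subseteq> {0..<n}}"

text \<open>Level 1 is the Pauli group; level k+1 consists of unitaries U
  with U P U^dagger in level k for all Paulis P. Level 0 is never used by the
  statement (it is an arbitrary placeholder, the empty set).\<close>

fun clifford_hierarchy :: "nat \<Rightarrow> nat \<Rightarrow> complex mat set" where
  "clifford_hierarchy n 0 = {}"
| "clifford_hierarchy n (Suc 0) = pauli_group n"
| "clifford_hierarchy n (Suc (Suc k)) =
     {U. unitary_mat (2 ^ n) U \<and>
         (\<forall>P \<in> pauli_group n. U * P * adj U \<in> clifford_hierarchy n (Suc k))}"

definition one_local :: "nat \<Rightarrow> complex mat \<Rightarrow> bool" where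
  "one_local n U \<longleftrightarrow> (\<exists>C. (\<forall>i<n. unitary_mat 2 (C i)) \<and> U = tensor n C)"

definition codespace :: "nat \<Rightarrow> nat set set \<Rightarrow> nat set set \<Rightarrow> complex vec set" where
  "codespace n A B = {\<psi> \<in> carrier_vec (2 ^ n).
      (\<forall>a\<in>A. Xpow n a *\<^sub>v \<psi> = \<psi>) \<and> (\<forall>b\<in>B. Zpow n b *\<^sub>v \<psi> = \<psi>)}"

definition logical_identity :: "nat \<Rightarrow> nat set set \<Rightarrow> nat set set \<Rightarrow> complex mat \<Rightarrow> bool" where
  "logical_identity n A B U \<longleftrightarrow> (\<forall>\<psi> \<in> codespace n A B. U *\<^sub>v \<psi> = \<psi>)"

end

theory Submission
  imports Defs
begin

lemma qbit_lt2[simp]: "qbit x i < 2" by (simp add: qbit_def)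

lemma qbit_high: "(y::nat) < 2^n \<Longrightarrow> qbit y n = 0"
  by (simp add: qbit_def)

lemma qbit_add_high: "(y::nat) < 2^n \<Longrightarrow> qbit (y + 2^n) n = 1"
  by (simp add: qbit_def)

lemma qbit_add_low: assumes "t < n" shows "qbit (y + 2^n) t = qbit y t"
proof -
  have e: "(2::nat)^n = 2^t * 2^(n-t)" using assms by (simp add: power_add[symmetric])
  have "(y + 2^n) div 2^t = y div 2^t + 2^(n-t)" unfolding e by simp
  moreover obtain k where "n - t = Suc k" using assms by (metis Suc_diff_Suc)
  ultimately show ?thesis unfolding qbit_def by simp
qed

lemma sum_split_pow2:
  fixes g :: "nat \<Rightarrow> 'a::comm_monoid_add"
  shows "(\<Sum>y<2^Suc n. g y) = (\<Sum>y<2^n. g y) + (\<Sum>y<2^n. g (y + 2^n))"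
proof -
  have u: "{..<(2::nat)^Suc n} = {..<2^n} \<union> {2^n..<2^n+2^n}" by auto
  have "(\<Sum>y<2^Suc n. g y) = sum g ({..<2^n} \<union> {2^n..<2^n+2^n})" by (simp only: u)
  also have "\<dots> = (\<Sum>y<2^n. g y) + (\<Sum>y\<in>{2^n..<2^n+2^n}. g y)"
    by (rule sum.union_disjoint) auto
  also have "(\<Sum>y\<in>{2^n..<2^n+2^n}. g y) = (\<Sum>y\<in>{0..<2^n}. g (y + 2^n))"
    using sum.shift_bounds_nat_ivl[of g 0 "2^n" "2^n"] by simp
  finally show ?thesis by (simp add: lessThan_atLeast0)
qed

lemma sum_prod_bits:
  fixes f :: "nat \<Rightarrow> nat \<Rightarrow> 'a::comm_semiring_1"
  shows "(\<Sum>y<2^n. \<Prod>t<n. f t (qbit y t)) = (\<Prod>t<n. f t 0 + f t 1)"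
proof (induction n)
  case 0 then show ?case by simp
next
  case (Suc n)
  have a: "(\<Prod>t<Suc n. f t (qbit y t)) = (\<Prod>t<n. f t (qbit y t)) * f n 0" if "y < 2^n" for y
    using that by (simp add: qbit_high)
  have b: "(\<Prod>t<Suc n. f t (qbit (y + 2^n) t)) = (\<Prod>t<n. f t (qbit y t)) * f n 1" if "y < 2^n" for y
  proof -
    have "(\<Prod>t<n. f t (qbit (y + 2^n) t)) = (\<Prod>t<n. f t (qbit y t))"
      by (rule prod.cong) (auto simp: qbit_add_low)
    then show ?thesis using that by (simp add: qbit_add_high)
  qed
  have "(\<Sum>y<2^Suc n. \<Prod>t<Suc n. f t (qbit y t))
     = (\<Sum>y<2^n. (\<Prod>t<n. f t (qbit y t)) * f n 0) + (\<Sum>y<2^n. (\<Prod>t<n. f t (qbit y t)) * f n 1)"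
    unfolding sum_split_pow2
    by (intro arg_cong2[where f="(+)"] sum.cong refl) (metis a b lessThan_iff)+
  also have "\<dots> = (\<Prod>t<n. f t 0 + f t 1) * (f n 0 + f n 1)"
    by (simp add: sum_distrib_right[symmetric] Suc distrib_left)
  finally show ?case by simp
qed

lemma qbit_bit: "qbit x t = (if bit x t then 1 else 0)"
  by (simp add: qbit_def bit_iff_odd odd_iff_mod_2_eq_one)

lemma bits_eq:
  assumes "(x::nat) < 2^n" "y < 2^n" "\<forall>t<n. qbit x t = qbit y t"
  shows "x = y"
proof (rule bit_eqI)
  fix t show "bit x t = bit y t"
  proof (cases "t < n")
    case True then show ?thesis using assms(3) by (auto simp: qbit_bit split: if_splits)
  next
    case False
    then have "bit x t = False" "bit y t = False" using assms(1,2)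
      by (metis bit_take_bit_iff not_less take_bit_nat_eq_self_iff)+
    then show ?thesis by simp
  qed
qed

lemma bits_exist:
  assumes "\<forall>t<n. p t < (2::nat)"
  shows "\<exists>x<2^n. \<forall>t<n. qbit x t = p t"
  using assms
proof (induction n)
  case 0 then show ?case by auto
next
  case (Suc n)
  then obtain x where x: "x < 2^n" "\<forall>t<n. qbit x t = p t" by auto
  show ?case
  proof (cases "p n = 0")
    case True
    then show ?thesis using x by (intro exI[of _ x]) (auto simp: less_Suc_eq qbit_high)
  next
    case False
    then have "p n = 1" using Suc.prems by fastforce
    then show ?thesis using x
      by (intro exI[of _ "x + 2^n"]) (auto simp: less_Suc_eq qbit_add_high qbit_add_low)
  qed
qed

lemma tensor_carrier[simp]: "tensor n C \<in> carrier_mat (2^n) (2^n)" by (simp add: tensor_def)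
lemma tensor_dim[simp]: "dim_row (tensor n C) = 2^n" "dim_col (tensor n C) = 2^n"
  by (simp_all add: tensor_def)
lemma tensor_index: "x < 2^n \<Longrightarrow> y < 2^n \<Longrightarrow> tensor n C $$ (x,y) = (\<Prod>i<n. C i $$ (qbit x i, qbit y i))"
  by (simp add: tensor_def)

lemma tensor_cong: "(\<And>t. t < n \<Longrightarrow> C t = D t) \<Longrightarrow> tensor n C = tensor n D"
  by (rule eq_matI) (auto simp: tensor_index intro!: prod.cong)

lemma mult2_index:
  assumes "A \<in> carrier_mat 2 2" "B \<in> carrier_mat 2 2" "p < 2" "q < 2"
  shows "(A * B) $$ (p,q) = A $$ (p,0) * B $$ (0,q) + A $$ (p,1) * B $$ (1,q)"
  using assms by (simp add: scalar_prod_def numeral_2_eq_2)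

lemma tensor_mult:
  assumes "\<And>t. t < n \<Longrightarrow> A t \<in> carrier_mat 2 2" "\<And>t. t < n \<Longrightarrow> B t \<in> carrier_mat 2 2"
  shows "tensor n A * tensor n B = tensor n (\<lambda>t. A t * B t)"
proof (rule eq_matI)
  fix x z assume x: "x < dim_row (tensor n (\<lambda>t. A t * B t))" and z: "z < dim_col (tensor n (\<lambda>t. A t * B t))"
  have "(tensor n A * tensor n B) $$ (x,z) = (\<Sum>y<2^n. tensor n A $$ (x,y) * tensor n B $$ (y,z))"
    using x z by (simp add: scalar_prod_def lessThan_atLeast0)
  also have "\<dots> = (\<Sum>y<2^n. \<Prod>t<n. A t $$ (qbit x t, qbit y t) * B t $$ (qbit y t, qbit z t))"
    using x z by (simp add: tensor_index prod.distrib)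
  also have "\<dots> = (\<Prod>t<n. A t $$ (qbit x t, 0) * B t $$ (0, qbit z t) + A t $$ (qbit x t, 1) * B t $$ (1, qbit z t))"
    by (rule sum_prod_bits[of "\<lambda>t s. A t $$ (qbit x t, s) * B t $$ (s, qbit z t)"])
  also have "\<dots> = tensor n (\<lambda>t. A t * B t) $$ (x,z)"
    using x z assms by (auto simp: tensor_index mult2_index intro!: prod.cong)
  finally show "(tensor n A * tensor n B) $$ (x,z) = tensor n (\<lambda>t. A t * B t) $$ (x,z)" .
qed auto

lemma adj_carrier[simp]: "A \<in> carrier_mat r c \<Longrightarrow> adj A \<in> carrier_mat c r"
  by (simp add: adj_def)
lemma adj_dim[simp]: "dim_row (adj A) = dim_col A" "dim_col (adj A) = dim_row A"
  by (simp_all add: adj_def)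
lemma adj_index[simp]: "i < dim_col A \<Longrightarrow> j < dim_row A \<Longrightarrow> adj A $$ (i,j) = cnj (A $$ (j,i))"
  by (simp add: adj_def)

lemma adj_index2: "A \<in> carrier_mat 2 2 \<Longrightarrow> i < 2 \<Longrightarrow> j < 2 \<Longrightarrow> adj A $$ (i,j) = cnj (A $$ (j,i))"
  by (simp add: adj_def)
lemma smult2_index: "A \<in> carrier_mat 2 2 \<Longrightarrow> i < 2 \<Longrightarrow> j < 2 \<Longrightarrow> (z \<cdot>\<^sub>m A) $$ (i,j) = z * (A $$ (i,j))"
  by simp

lemma tensor_adj:
  assumes "\<And>t. t < n \<Longrightarrow> C t \<in> carrier_mat 2 2"
  shows "adj (tensor n C) = tensor n (\<lambda>t. adj (C t))"
  by (rule eq_matI) (use assms in \<open>auto simp: tensor_index cnj_prod adj_index2 intro!: prod.cong\<close>)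

lemma tensor_id:
  assumes "\<And>t. t < n \<Longrightarrow> C t = 1\<^sub>m 2"
  shows "tensor n C = 1\<^sub>m (2^n)"
proof (rule eq_matI)
  fix x y assume x: "x < dim_row (1\<^sub>m (2^n) :: complex mat)" and y: "y < dim_col (1\<^sub>m (2^n) :: complex mat)"
  show "tensor n C $$ (x,y) = 1\<^sub>m (2^n) $$ (x,y)"
  proof (cases "x = y")
    case True then show ?thesis using x y assms by (simp add: tensor_index)
  next
    case False
    then obtain t where t: "t < n" "qbit x t \<noteq> qbit y t" using bits_eq[of x n y] x y by auto
    have "(\<Prod>i<n. C i $$ (qbit x i, qbit y i)) = 0"
      using t assms by (auto simp: prod_zero_iff intro!: bexI[of _ t])
    then show ?thesis using x y False by (simp add: tensor_index)
  qed
qed auto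

lemma tensor_smult:
  assumes "\<And>t. t < n \<Longrightarrow> C t \<in> carrier_mat 2 2"
  shows "tensor n (\<lambda>t. z t \<cdot>\<^sub>m C t) = (\<Prod>t<n. z t) \<cdot>\<^sub>m tensor n C"
  by (rule eq_matI) (use assms in \<open>auto simp: tensor_index prod.distrib[symmetric] smult2_index intro!: prod.cong\<close>)

lemma tensor_1:
  assumes "C 0 \<in> carrier_mat 2 2"
  shows "tensor 1 C = C 0"
  by (rule eq_matI) (use assms in \<open>auto simp: tensor_index qbit_def\<close>)

lemma tensor_extract:
  assumes cC: "\<And>t. t<n \<Longrightarrow> C t \<in> carrier_mat 2 2" and cD: "\<And>t. t<n \<Longrightarrow> D t \<in> carrier_mat 2 2"
    and nz: "\<And>t. t<n \<Longrightarrow> \<exists>p q. p<2 \<and> q<2 \<and> C t $$ (p,q) \<noteq> 0"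
    and eq: "tensor n C = w \<cdot>\<^sub>m tensor n D" and t: "t < n"
  shows "\<exists>l. C t = l \<cdot>\<^sub>m D t"
proof -
  have "\<forall>s. \<exists>pq. s < n \<longrightarrow> fst pq < 2 \<and> snd pq < 2 \<and> C s $$ pq \<noteq> 0"
    using nz by fastforce
  then obtain PQ where PQ: "\<And>s. s < n \<Longrightarrow> fst (PQ s) < 2 \<and> snd (PQ s) < 2 \<and> C s $$ PQ s \<noteq> 0"
    by metis
  define P where "P s = fst (PQ s)" for s
  define Q where "Q s = snd (PQ s)" for s
  have PQ': "\<And>s. s < n \<Longrightarrow> P s < 2 \<and> Q s < 2 \<and> C s $$ (P s, Q s) \<noteq> 0"
    using PQ unfolding P_def Q_def by auto
  define KC where "KC = (\<Prod>s\<in>{..<n}-{t}. C s $$ (P s, Q s))"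
  define KD where "KD = (\<Prod>s\<in>{..<n}-{t}. D s $$ (P s, Q s))"
  have KC0: "KC \<noteq> 0" unfolding KC_def using PQ' by (auto simp: prod_zero_iff)
  have ent: "C t $$ (p,q) = (w * KD / KC) * D t $$ (p,q)" if pq: "p < 2" "q < 2" for p q
  proof -
    have b1: "\<forall>s<n. (P(t:=p)) s < 2" "\<forall>s<n. (Q(t:=q)) s < 2" using PQ' pq by auto
    obtain x where x: "x < 2^n" "\<forall>s<n. qbit x s = (P(t:=p)) s"
      using bits_exist[OF b1(1)] by blast
    obtain y where y: "y < 2^n" "\<forall>s<n. qbit y s = (Q(t:=q)) s"
      using bits_exist[OF b1(2)] by blast
    have "tensor n C $$ (x,y) = C t $$ (p,q) * KC"
    proof -
      have "tensor n C $$ (x,y) = (\<Prod>s<n. C s $$ ((P(t:=p)) s, (Q(t:=q)) s))"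
        using x y by (simp add: tensor_index)
      also have "\<dots> = C t $$ (p,q) * (\<Prod>s\<in>{..<n}-{t}. C s $$ ((P(t:=p)) s, (Q(t:=q)) s))"
        using t by (subst prod.remove[of _ t]) auto
      also have "(\<Prod>s\<in>{..<n}-{t}. C s $$ ((P(t:=p)) s, (Q(t:=q)) s)) = KC"
        unfolding KC_def by (rule prod.cong) auto
      finally show ?thesis .
    qed
    moreover have "tensor n D $$ (x,y) = D t $$ (p,q) * KD"
    proof -
      have "tensor n D $$ (x,y) = (\<Prod>s<n. D s $$ ((P(t:=p)) s, (Q(t:=q)) s))"
        using x y by (simp add: tensor_index)
      also have "\<dots> = D t $$ (p,q) * (\<Prod>s\<in>{..<n}-{t}. D s $$ ((P(t:=p)) s, (Q(t:=q)) s))"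
        using t by (subst prod.remove[of _ t]) auto
      also have "(\<Prod>s\<in>{..<n}-{t}. D s $$ ((P(t:=p)) s, (Q(t:=q)) s)) = KD"
        unfolding KD_def by (rule prod.cong) auto
      finally show ?thesis .
    qed
    moreover have "tensor n C $$ (x,y) = w * tensor n D $$ (x,y)"
      using eq x y by simp
    ultimately have "C t $$ (p,q) * KC = w * (D t $$ (p,q) * KD)" by simp
    then show ?thesis using KC0 by (simp add: field_simps)
  qed
  have c1: "C t \<in> carrier_mat 2 2" and c2: "D t \<in> carrier_mat 2 2" using cC cD t by auto
  show ?thesis
    by (rule exI[of _ "w * KD / KC"], rule eq_matI) (use ent c1 c2 in auto)
qed

lemma adj_mult:
  assumes "A \<in> carrier_mat r k" "B \<in> carrier_mat k c"
  shows "adj (A * B) = adj B * adj A"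
  by (rule eq_matI) (use assms in \<open>auto simp: scalar_prod_def cnj_sum intro!: sum.cong\<close>)

lemma adj_smult: "adj (z \<cdot>\<^sub>m A) = cnj z \<cdot>\<^sub>m adj A"
  by (rule eq_matI) auto

lemma adj_adj: "adj (adj A) = A"
  by (rule eq_matI) auto

lemma adj_one[simp]: "adj (1\<^sub>m N) = 1\<^sub>m N"
  by (rule eq_matI) auto

lemma a3: "A \<in> carrier_mat N N \<Longrightarrow> B \<in> carrier_mat N N \<Longrightarrow> C \<in> carrier_mat N N \<Longrightarrow> A * B * C = A * (B * C)"
  by (rule assoc_mult_mat)

lemma unitary_carrier: "unitary_mat N U \<Longrightarrow> U \<in> carrier_mat N N"
  by (simp add: unitary_mat_def)

lemma unitary_adj: "unitary_mat N U \<Longrightarrow> unitary_mat N (adj U)"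
  unfolding unitary_mat_def using adj_adj by (auto simp: adj_carrier)

lemma unitary_mult:
  assumes "unitary_mat N U" "unitary_mat N V"
  shows "unitary_mat N (U * V)"
proof -
  have U: "U \<in> carrier_mat N N" "adj U \<in> carrier_mat N N" and V: "V \<in> carrier_mat N N" "adj V \<in> carrier_mat N N"
    using assms by (auto simp: unitary_mat_def)
  have "U * V * adj (U * V) = U * V * (adj V * adj U)"
    using U V by (simp add: adj_mult)
  also have "\<dots> = U * (V * adj V) * adj U"
    using U V by (simp add: a3[of _ N] mult_carrier_mat[of _ N N _ N])
  also have "\<dots> = 1\<^sub>m N" using assms U by (simp add: unitary_mat_def)
  finally have 1: "U * V * adj (U * V) = 1\<^sub>m N" .
  have "adj (U * V) * (U * V) = adj V * adj U * (U * V)"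
    using U V by (simp add: adj_mult)
  also have "\<dots> = adj V * (adj U * U) * V"
    using U V by (simp add: a3[of _ N] mult_carrier_mat[of _ N N _ N])
  also have "\<dots> = 1\<^sub>m N" using assms V by (simp add: unitary_mat_def)
  finally show ?thesis using 1 U V unfolding unitary_mat_def by auto
qed

lemma smult_smult_mat: "a \<cdot>\<^sub>m (b \<cdot>\<^sub>m (A :: complex mat)) = (a * b) \<cdot>\<^sub>m A"
  by (rule eq_matI) auto

lemma smult_one_mat: "(1::complex) \<cdot>\<^sub>m A = A"
  by (rule eq_matI) auto

lemma unitary_smult:
  assumes "unitary_mat N U" "cmod z = 1"
  shows "unitary_mat N (z \<cdot>\<^sub>m U)"
proof -
  have zz: "z * cnj z = 1" "cnj z * z = 1" using assms(2)
    by (metis complex_norm_square mult.commute of_real_1 power_one)+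
  have U: "U \<in> carrier_mat N N" "adj U \<in> carrier_mat N N" using assms(1) by (auto simp: unitary_mat_def)
  show ?thesis using assms(1) zz
    by (auto simp: unitary_mat_def adj_smult mult_smult_distrib[of _ N N _ N] mult_smult_assoc_mat[of _ N N _ N] U
        smult_smult_mat smult_one_mat)
qed


definition pz1 :: "bool \<Rightarrow> bool \<Rightarrow> complex mat" where
  "pz1 \<alpha> \<beta> = (if \<alpha> then pauli_X else 1\<^sub>m 2) * (if \<beta> then pauli_Z else 1\<^sub>m 2)"

definition pz :: "nat set \<Rightarrow> nat set \<Rightarrow> nat \<Rightarrow> complex mat" where
  "pz a b t = pz1 (t \<in> a) (t \<in> b)"

lemma pauli_X_carrier[simp]: "pauli_X \<in> carrier_mat 2 2" by (simp add: pauli_X_def)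
lemma pauli_Z_carrier[simp]: "pauli_Z \<in> carrier_mat 2 2" by (simp add: pauli_Z_def)
lemma pz1_carrier[simp]: "pz1 \<alpha> \<beta> \<in> carrier_mat 2 2" unfolding pz1_def
  by (rule mult_carrier_mat) auto
lemma pz1_dim[simp]: "dim_row (pz1 \<alpha> \<beta>) = 2" "dim_col (pz1 \<alpha> \<beta>) = 2"
  using pz1_carrier by (auto simp del: pz1_carrier)
lemma pz_carrier[simp]: "pz a b t \<in> carrier_mat 2 2" by (simp add: pz_def)

lemma pauli_X_index: "p < 2 \<Longrightarrow> q < 2 \<Longrightarrow> pauli_X $$ (p,q) = (if p \<noteq> q then 1 else 0)"
  by (simp add: pauli_X_def)
lemma pauli_Z_index: "p < 2 \<Longrightarrow> q < 2 \<Longrightarrow> pauli_Z $$ (p,q) = (if p = q then (if p = 0 then 1 else -1) else 0)"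
  by (simp add: pauli_Z_def)

lemma pz1_index:
  assumes "p < 2" "q < 2"
  shows "pz1 \<alpha> \<beta> $$ (p,q) = (if q = (if \<alpha> then 1 - p else p) then (if \<beta> \<and> q = 1 then -1 else 1) else 0)"
proof -
  have X: "(if \<alpha> then pauli_X else 1\<^sub>m 2) \<in> carrier_mat 2 2" and Z: "(if \<beta> then pauli_Z else 1\<^sub>m 2) \<in> carrier_mat 2 2"
    by auto
  show ?thesis unfolding pz1_def mult2_index[OF X Z assms]
    using assms by (cases \<alpha>; cases \<beta>) (auto simp: pauli_X_index pauli_Z_index less_2_cases_iff)
qed

lemma pz1_FF: "pz1 False False = 1\<^sub>m 2" by (simp add: pz1_def)

lemma pz1_mat: "pz1 \<alpha> \<beta> = mat 2 2 (\<lambda>(p,q). if q = (if \<alpha> then 1 - p else p) then (if \<beta> \<and> q = 1 then -1 else 1) else 0)"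
  by (rule eq_matI) (auto simp: pz1_index)

lemma pz1_mult: "pz1 \<alpha> \<beta> * pz1 \<gamma> \<delta> = (if \<beta> \<and> \<gamma> then -1 else 1) \<cdot>\<^sub>m pz1 (\<alpha> \<noteq> \<gamma>) (\<beta> \<noteq> \<delta>)"
  unfolding pz1_mat
  by (cases \<alpha>; cases \<beta>; cases \<gamma>; cases \<delta>; rule eq_matI;
      auto simp: scalar_prod_def numeral_2_eq_2 less_Suc_eq)

lemma pz1_adj: "adj (pz1 \<alpha> \<beta>) = (if \<alpha> \<and> \<beta> then -1 else 1) \<cdot>\<^sub>m pz1 \<alpha> \<beta>"
  by (rule eq_matI) (auto simp: adj_index2 pz1_index less_2_cases_iff)

lemma pz1_sq: "pz1 \<alpha> \<beta> * pz1 \<alpha> \<beta> = (if \<alpha> \<and> \<beta> then -1 else 1) \<cdot>\<^sub>m 1\<^sub>m 2"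
  by (simp add: pz1_mult pz1_FF)

lemma pz1_unitary: "unitary_mat 2 (pz1 \<alpha> \<beta>)"
proof -
  have "pz1 \<alpha> \<beta> * adj (pz1 \<alpha> \<beta>) = 1\<^sub>m 2" "adj (pz1 \<alpha> \<beta>) * pz1 \<alpha> \<beta> = 1\<^sub>m 2"
    by (auto simp: pz1_adj pz1_sq mult_smult_distrib[of _ 2 2 _ 2] mult_smult_assoc_mat[of _ 2 2 _ 2] smult_smult_mat smult_one_mat)
  then show ?thesis by (auto simp: unitary_mat_def)
qed

lemma pm1_ipow: "(if P then -1 else 1) = (\<i>::complex)^(if P then 2 else 0)" by simp

lemma Xpow_Zpow: "Xpow n a * Zpow n b = tensor n (pz a b)"
  unfolding Xpow_def Zpow_def by (subst tensor_mult) (auto intro!: tensor_cong simp: pz_def pz1_def)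

lemma pz_restrict: "tensor n (pz a b) = tensor n (pz (a \<inter> {0..<n}) (b \<inter> {0..<n}))"
  by (rule tensor_cong) (auto simp: pz_def)

lemma pauli_char: "P \<in> pauli_group n \<longleftrightarrow> (\<exists>c a b. P = \<i>^c \<cdot>\<^sub>m tensor n (pz a b))"
proof
  assume "P \<in> pauli_group n" then show "\<exists>c a b. P = \<i>^c \<cdot>\<^sub>m tensor n (pz a b)"
    by (auto simp: pauli_group_def Xpow_Zpow)
next
  assume "\<exists>c a b. P = \<i>^c \<cdot>\<^sub>m tensor n (pz a b)"
  then obtain c a b where P: "P = \<i>^c \<cdot>\<^sub>m tensor n (pz a b)" by blast
  show "P \<in> pauli_group n" unfolding pauli_group_def
    using P pz_restrict[of n a b] by (auto simp: Xpow_Zpow)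
qed

lemma tensor_spi:
  assumes "\<And>t. t < n \<Longrightarrow> \<exists>c \<alpha> \<beta>. C t = \<i>^c \<cdot>\<^sub>m pz1 \<alpha> \<beta>"
  shows "tensor n C \<in> pauli_group n"
proof -
  have "\<forall>t. \<exists>x. t < n \<longrightarrow> C t = \<i>^(fst x) \<cdot>\<^sub>m pz1 (fst (snd x)) (snd (snd x))"
    using assms by fastforce
  then obtain F where F: "\<And>t. t < n \<Longrightarrow> C t = \<i>^(fst (F t)) \<cdot>\<^sub>m pz1 (fst (snd (F t))) (snd (snd (F t)))"
    by metis
  define a where "a = {t. fst (snd (F t))}"
  define b where "b = {t. snd (snd (F t))}"
  have "tensor n C = tensor n (\<lambda>t. \<i>^(fst (F t)) \<cdot>\<^sub>m pz a b t)"
    by (rule tensor_cong) (simp add: F pz_def a_def b_def)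
  also have "\<dots> = (\<Prod>t<n. \<i>^(fst (F t))) \<cdot>\<^sub>m tensor n (pz a b)"
    by (rule tensor_smult) simp
  also have "(\<Prod>t<n. \<i>^(fst (F t))) = \<i>^(\<Sum>t<n. fst (F t))"
    by (simp add: power_sum)
  finally show ?thesis unfolding pauli_char by blast
qed

lemma pauli_1: "P \<in> pauli_group 1 \<longleftrightarrow> (\<exists>c \<alpha> \<beta>. P = \<i>^c \<cdot>\<^sub>m pz1 \<alpha> \<beta>)"
proof
  assume "P \<in> pauli_group 1"
  then obtain c a b where "P = \<i>^c \<cdot>\<^sub>m tensor 1 (pz a b)" unfolding pauli_char by blast
  moreover have "tensor 1 (pz a b) = pz1 (0 \<in> a) (0 \<in> b)" using tensor_1[of "pz a b"] by (simp add: pz_def)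
  ultimately show "\<exists>c \<alpha> \<beta>. P = \<i>^c \<cdot>\<^sub>m pz1 \<alpha> \<beta>" by metis
next
  assume "\<exists>c \<alpha> \<beta>. P = \<i>^c \<cdot>\<^sub>m pz1 \<alpha> \<beta>"
  then obtain c \<alpha> \<beta> where P: "P = \<i>^c \<cdot>\<^sub>m pz1 \<alpha> \<beta>" by blast
  have "tensor 1 (pz {t. \<alpha>} {t. \<beta>}) = pz1 \<alpha> \<beta>" using tensor_1[of "pz {t. \<alpha>} {t. \<beta>}"] by (simp add: pz_def)
  then show "P \<in> pauli_group 1" unfolding pauli_char using P by metis
qed

lemma pz1_pauli: "pz1 \<alpha> \<beta> \<in> pauli_group 1"
  unfolding pauli_1 by (rule exI[of _ 0]) (auto simp: smult_one_mat)

lemma pauli_carrier: "P \<in> pauli_group n \<Longrightarrow> P \<in> carrier_mat (2^n) (2^n)"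
  unfolding pauli_char by auto

lemma pauli_iphase: assumes "P \<in> pauli_group n" shows "\<i>^c \<cdot>\<^sub>m P \<in> pauli_group n"
proof -
  obtain d a b where P: "P = \<i>^d \<cdot>\<^sub>m tensor n (pz a b)" using assms unfolding pauli_char by blast
  have "\<i>^c \<cdot>\<^sub>m P = \<i>^(c+d) \<cdot>\<^sub>m tensor n (pz a b)" unfolding P by (simp add: smult_smult_mat power_add)
  then show ?thesis unfolding pauli_char by blast
qed

lemma pauli_mult:
  assumes "P \<in> pauli_group n" "Q \<in> pauli_group n"
  shows "P * Q \<in> pauli_group n"
proof -
  obtain c a b d a' b' where P: "P = \<i>^c \<cdot>\<^sub>m tensor n (pz a b)" and Q: "Q = \<i>^d \<cdot>\<^sub>m tensor n (pz a' b')"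
    using assms unfolding pauli_char by blast
  have "P * Q = \<i>^d \<cdot>\<^sub>m (\<i>^c \<cdot>\<^sub>m (tensor n (pz a b) * tensor n (pz a' b')))"
    unfolding P Q by (simp add: mult_smult_distrib[of _ "2^n" "2^n" _ "2^n"] mult_smult_assoc_mat[of _ "2^n" "2^n" _ "2^n"])
  also have "tensor n (pz a b) * tensor n (pz a' b') = tensor n (\<lambda>t. pz a b t * pz a' b' t)"
    by (rule tensor_mult) auto
  finally have e: "P * Q = \<i>^d \<cdot>\<^sub>m (\<i>^c \<cdot>\<^sub>m tensor n (\<lambda>t. pz a b t * pz a' b' t))" .
  have "tensor n (\<lambda>t. pz a b t * pz a' b' t) \<in> pauli_group n"
  proof (rule tensor_spi)
    fix t
    show "\<exists>c \<alpha> \<beta>. pz a b t * pz a' b' t = \<i>^c \<cdot>\<^sub>m pz1 \<alpha> \<beta>"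
      unfolding pz_def pz1_mult pm1_ipow by blast
  qed
  then show ?thesis unfolding e by (intro pauli_iphase)
qed

lemma pauli_adj:
  assumes "P \<in> pauli_group n"
  shows "adj P \<in> pauli_group n"
proof -
  obtain c a b where P: "P = \<i>^c \<cdot>\<^sub>m tensor n (pz a b)"
    using assms unfolding pauli_char by blast
  have "adj P = \<i>^(3*c) \<cdot>\<^sub>m tensor n (\<lambda>t. adj (pz a b t))"
  proof -
    have i3: "(\<i>::complex)^3 = -\<i>" by (simp add: power3_eq_cube)
    show ?thesis unfolding P adj_smult by (subst tensor_adj) (auto simp: power_mult i3)
  qed
  moreover have "tensor n (\<lambda>t. adj (pz a b t)) \<in> pauli_group n"
  proof (rule tensor_spi)
    fix t
    show "\<exists>c \<alpha> \<beta>. adj (pz a b t) = \<i>^c \<cdot>\<^sub>m pz1 \<alpha> \<beta>"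
      unfolding pz_def pz1_adj pm1_ipow by blast
  qed
  ultimately show ?thesis by (simp add: pauli_iphase)
qed

lemma tensor_unitary:
  assumes "\<And>t. t < n \<Longrightarrow> unitary_mat 2 (C t)"
  shows "unitary_mat (2^n) (tensor n C)"
proof -
  have c: "\<And>t. t < n \<Longrightarrow> C t \<in> carrier_mat 2 2" "\<And>t. t < n \<Longrightarrow> adj (C t) \<in> carrier_mat 2 2"
    using assms by (auto simp: unitary_mat_def)
  have "tensor n C * adj (tensor n C) = tensor n (\<lambda>t. C t * adj (C t))"
    using c by (simp add: tensor_adj tensor_mult)
  also have "\<dots> = 1\<^sub>m (2^n)" using assms by (intro tensor_id) (auto simp: unitary_mat_def)
  finally have 1: "tensor n C * adj (tensor n C) = 1\<^sub>m (2^n)" .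
  have "adj (tensor n C) * tensor n C = tensor n (\<lambda>t. adj (C t) * C t)"
    using c by (simp add: tensor_adj tensor_mult)
  also have "\<dots> = 1\<^sub>m (2^n)" using assms by (intro tensor_id) (auto simp: unitary_mat_def)
  finally show ?thesis using 1 by (auto simp: unitary_mat_def)
qed

lemma cmod_ipow: "cmod (\<i>^c) = 1" by (simp add: norm_power)

lemma pauli_unitary:
  assumes "P \<in> pauli_group n"
  shows "unitary_mat (2^n) P"
proof -
  obtain c a b where P: "P = \<i>^c \<cdot>\<^sub>m tensor n (pz a b)"
    using assms unfolding pauli_char by blast
  show ?thesis unfolding P
    by (rule unitary_smult[OF tensor_unitary cmod_ipow]) (simp add: pz_def pz1_unitary)
qed

lemma prod_pm1:
  fixes f :: "nat \<Rightarrow> complex"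
  assumes "\<And>t. t \<in> A \<Longrightarrow> f t = 1 \<or> f t = -1"
  shows "\<exists>e. prod f A = (-1)^e"
  using assms
proof (induction A rule: infinite_finite_induct)
  case (infinite A) then show ?case by (intro exI[of _ 0]) simp
next
  case empty then show ?case by (intro exI[of _ 0]) simp
next
  case (insert x F)
  then obtain e where e: "prod f F = (-1)^e" by auto
  have "f x = 1 \<or> f x = -1" using insert by auto
  then show ?case
  proof
    assume "f x = 1" then show ?thesis using insert e by (intro exI[of _ e]) simp
  next
    assume "f x = -1" then show ?thesis using insert e by (intro exI[of _ "Suc e"]) simp
  qed
qed

lemma ii_pow: "\<i>^c * \<i>^c = (-1::complex)^c"
proof -
  have "\<i>^c * \<i>^c = (\<i>::complex)^(2*c)" by (simp only: mult_2 power_add)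
  also have "\<dots> = (\<i>^2)^c" by (simp only: power_mult)
  finally show ?thesis by simp
qed

lemma pauli_sq:
  assumes "P \<in> pauli_group n"
  shows "\<exists>e. P * P = (-1::complex)^e \<cdot>\<^sub>m 1\<^sub>m (2^n)"
proof -
  obtain c a b where P: "P = \<i>^c \<cdot>\<^sub>m tensor n (pz a b)"
    using assms unfolding pauli_char by blast
  define f where "f t = (if t \<in> a \<and> t \<in> b then -1 else (1::complex))" for t
  have "\<exists>e. prod f {..<n} = (-1)^e" by (rule prod_pm1) (simp add: f_def)
  then obtain e where e: "prod f {..<n} = (-1)^e" by blast
  have "P * P = \<i>^c \<cdot>\<^sub>m (\<i>^c \<cdot>\<^sub>m (tensor n (pz a b) * tensor n (pz a b)))"
    unfolding P by (simp add: mult_smult_distrib[of _ "2^n" "2^n" _ "2^n"] mult_smult_assoc_mat[of _ "2^n" "2^n" _ "2^n"])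
  also have "tensor n (pz a b) * tensor n (pz a b) = tensor n (\<lambda>t. pz a b t * pz a b t)"
    by (rule tensor_mult) auto
  also have "\<dots> = tensor n (\<lambda>t. f t \<cdot>\<^sub>m 1\<^sub>m 2)"
    by (rule tensor_cong) (simp only: pz_def pz1_sq f_def)
  also have "\<dots> = prod f {..<n} \<cdot>\<^sub>m tensor n (\<lambda>t. 1\<^sub>m 2)"
    by (rule tensor_smult) simp
  also have "tensor n (\<lambda>t. 1\<^sub>m 2) = 1\<^sub>m (2^n)" by (rule tensor_id) simp
  finally have "P * P = \<i>^c \<cdot>\<^sub>m (\<i>^c \<cdot>\<^sub>m ((-1)^e \<cdot>\<^sub>m 1\<^sub>m (2^n)))" unfolding e .
  also have "\<dots> = (\<i>^c * \<i>^c * (-1)^e) \<cdot>\<^sub>m 1\<^sub>m (2^n)" by (simp only: smult_smult_mat mult.assoc)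
  also have "\<i>^c * \<i>^c * (-1)^e = (-1::complex)^(c + e)" by (simp only: ii_pow power_add)
  finally show ?thesis by (rule exI)
qed

abbreviation CH where "CH \<equiv> clifford_hierarchy"

lemma cnj_mult_self: "cmod z = 1 \<Longrightarrow> cnj z * z = 1"
  by (metis complex_norm_square mult.commute of_real_1 power_one)
lemma mult_cnj_self: "cmod z = 1 \<Longrightarrow> z * cnj z = 1"
  using cnj_mult_self by (simp add: mult.commute)

lemma CH_SS: "M \<in> CH n (Suc (Suc k)) \<longleftrightarrow> unitary_mat (2^n) M \<and> (\<forall>P\<in>pauli_group n. M * P * adj M \<in> CH n (Suc k))"
  by simp

lemma CH_unitary: "1 \<le> l \<Longrightarrow> M \<in> CH n l \<Longrightarrow> unitary_mat (2^n) M"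
  by (cases l; cases "l - 1") (auto simp: pauli_unitary)

lemma CH_carrier: "1 \<le> l \<Longrightarrow> M \<in> CH n l \<Longrightarrow> M \<in> carrier_mat (2^n) (2^n)"
  using CH_unitary unitary_carrier by blast

lemma smult_conj3:
  assumes "M \<in> carrier_mat N N" "P \<in> carrier_mat N N" "cmod z = 1"
  shows "(z \<cdot>\<^sub>m M) * P * adj (z \<cdot>\<^sub>m M) = M * P * adj M"
proof -
  have A: "adj M \<in> carrier_mat N N" using assms by simp
  have "(z \<cdot>\<^sub>m M) * P * adj (z \<cdot>\<^sub>m M) = (cnj z * z) \<cdot>\<^sub>m (M * P * adj M)"
    using assms A by (simp add: adj_smult mult_smult_assoc_mat[of _ N N _ N] mult_smult_distrib[of _ N N _ N] smult_smult_mat)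
  then show ?thesis using cnj_mult_self[OF assms(3)] by (simp add: smult_one_mat)
qed

lemma CH_phase:
  assumes "M \<in> CH n (Suc (Suc k))" "cmod z = 1"
  shows "z \<cdot>\<^sub>m M \<in> CH n (Suc (Suc k))"
proof -
  have U: "unitary_mat (2^n) M" using assms by simp
  have C: "M \<in> carrier_mat (2^n) (2^n)" using U unitary_carrier by blast
  show ?thesis using assms unitary_smult[OF U assms(2)]
    by (auto simp: smult_conj3[OF C pauli_carrier assms(2)])
qed

lemma CH_iphase: "1 \<le> l \<Longrightarrow> M \<in> CH n l \<Longrightarrow> \<i>^c \<cdot>\<^sub>m M \<in> CH n l"
proof -
  assume l: "1 \<le> l" and M: "M \<in> CH n l"
  show ?thesis
  proof (cases l)
    case 0 then show ?thesis using l by simp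
  next
    case (Suc k)
    show ?thesis
    proof (cases k)
      case 0 then show ?thesis using M Suc by (simp add: pauli_iphase)
    next
      case (Suc k') then show ?thesis using M \<open>l = Suc k\<close> CH_phase cmod_ipow by blast
    qed
  qed
qed

lemma CH_mono_Suc: "CH n (Suc k) \<subseteq> CH n (Suc (Suc k))"
proof (induction k)
  case 0
  show ?case
  proof
    fix M assume M: "M \<in> CH n (Suc 0)"
    then have "M \<in> pauli_group n" by simp
    then show "M \<in> CH n (Suc (Suc 0))"
      by (auto simp: pauli_unitary pauli_mult pauli_adj)
  qed
next
  case (Suc k)
  show ?case
  proof
    fix M assume "M \<in> CH n (Suc (Suc k))"
    then show "M \<in> CH n (Suc (Suc (Suc k)))" using Suc.IH by auto
  qed
qed

lemma CH_mono: "1 \<le> l \<Longrightarrow> l \<le> m \<Longrightarrow> CH n l \<subseteq> CH n m"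
proof (induction m)
  case 0 then show ?case by simp
next
  case (Suc m)
  show ?case
  proof (cases "l = Suc m")
    case True then show ?thesis by simp
  next
    case False
    then have "l \<le> m" "1 \<le> m" using Suc.prems by auto
    then have "CH n l \<subseteq> CH n m" using Suc.IH Suc.prems by auto
    moreover obtain m' where "m = Suc m'" using \<open>1 \<le> m\<close> by (cases m) auto
    ultimately show ?thesis using CH_mono_Suc by blast
  qed
qed

lemma assoc5:
  assumes "A \<in> carrier_mat N N" "B \<in> carrier_mat N N" "C \<in> carrier_mat N N" "D \<in> carrier_mat N N" "E \<in> carrier_mat N N"
  shows "A * B * C * (D * E) = A * (B * C * D) * E"
  using assms by (simp add: a3[of _ N] mult_carrier_mat[of _ N N _ N])

lemma CH_pmult:
  assumes "M \<in> CH n (Suc k)" "P \<in> pauli_group n"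
  shows "M * P \<in> CH n (Suc k) \<and> P * M \<in> CH n (Suc k)"
  using assms
proof (induction k arbitrary: M P)
  case 0 then show ?case by (simp add: pauli_mult)
next
  case (Suc k)
  let ?N = "2^n"
  have UM: "unitary_mat ?N M" and UP: "unitary_mat ?N P" and UPa: "unitary_mat ?N (adj P)"
    using Suc.prems by (auto simp: pauli_unitary pauli_adj)
  have CM: "M \<in> carrier_mat ?N ?N" "adj M \<in> carrier_mat ?N ?N" using UM by (auto simp: unitary_mat_def)
  have CP: "P \<in> carrier_mat ?N ?N" "adj P \<in> carrier_mat ?N ?N" using UP by (auto simp: unitary_mat_def)
  have r: "M * P * Q * adj (M * P) \<in> CH n (Suc k)" if Q: "Q \<in> pauli_group n" for Q
  proof -
    have CQ: "Q \<in> carrier_mat ?N ?N" using Q pauli_carrier by blast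
    have "M * P * Q * adj (M * P) = M * (P * Q * adj P) * adj M"
      unfolding adj_mult[OF CM(1) CP(1)] by (rule assoc5) (use CM CP CQ in auto)
    moreover have "P * Q * adj P \<in> pauli_group n" using Q Suc.prems by (simp add: pauli_mult pauli_adj)
    ultimately show ?thesis using Suc.prems by auto
  qed
  have l: "P * M * Q * adj (P * M) \<in> CH n (Suc k)" if Q: "Q \<in> pauli_group n" for Q
  proof -
    have CQ: "Q \<in> carrier_mat ?N ?N" using Q pauli_carrier by blast
    have "P * M * Q * adj (P * M) = P * (M * Q * adj M) * adj P"
      unfolding adj_mult[OF CP(1) CM(1)] by (rule assoc5) (use CM CP CQ in auto)
    moreover have "M * Q * adj M \<in> CH n (Suc k)" using Q Suc.prems by auto
    ultimately show ?thesis using Suc.IH Suc.prems pauli_adj by metis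
  qed
  show ?case using r l unitary_mult[OF UM UP] unitary_mult[OF UP UM] by auto
qed

definition uptoph :: "nat \<Rightarrow> nat \<Rightarrow> complex mat \<Rightarrow> bool" where
  "uptoph n l M \<longleftrightarrow> (\<exists>z. cmod z = 1 \<and> z \<cdot>\<^sub>m M \<in> CH n l)"

lemma uptoph_in: "M \<in> CH n l \<Longrightarrow> uptoph n l M"
  unfolding uptoph_def by (intro exI[of _ 1]) (simp add: smult_one_mat)

lemma uptoph_SS: "uptoph n (Suc (Suc k)) M \<Longrightarrow> M \<in> CH n (Suc (Suc k))"
proof -
  assume "uptoph n (Suc (Suc k)) M"
  then obtain z where z: "cmod z = 1" "z \<cdot>\<^sub>m M \<in> CH n (Suc (Suc k))" unfolding uptoph_def by blast
  have "cnj z \<cdot>\<^sub>m (z \<cdot>\<^sub>m M) \<in> CH n (Suc (Suc k))" by (rule CH_phase[OF z(2)]) (use z in simp)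
  then show ?thesis using cnj_mult_self[OF z(1)] by (simp add: smult_smult_mat smult_one_mat)
qed

lemma uptoph_smult: "uptoph n l M \<Longrightarrow> cmod w = 1 \<Longrightarrow> uptoph n l (w \<cdot>\<^sub>m M)"
proof -
  assume "uptoph n l M" "cmod w = 1"
  then obtain z where z: "cmod z = 1" "z \<cdot>\<^sub>m M \<in> CH n l" unfolding uptoph_def by blast
  have "(z * cnj w) \<cdot>\<^sub>m (w \<cdot>\<^sub>m M) = z \<cdot>\<^sub>m M"
    using cnj_mult_self[OF \<open>cmod w = 1\<close>] by (simp add: smult_smult_mat mult.assoc)
  moreover have "cmod (z * cnj w) = 1" using z \<open>cmod w = 1\<close> by (simp add: norm_mult)
  ultimately show ?thesis unfolding uptoph_def using z by metis
qed

lemma conj_pauli_sq: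
  assumes U: "unitary_mat (2^n) W" and P: "P \<in> pauli_group n"
  shows "\<exists>e. (W * P * adj W) * (W * P * adj W) = (-1::complex)^e \<cdot>\<^sub>m 1\<^sub>m (2^n)"
proof -
  let ?N = "2^n"
  obtain e where e: "P * P = (-1::complex)^e \<cdot>\<^sub>m 1\<^sub>m ?N" using pauli_sq[OF P] by blast
  have CW: "W \<in> carrier_mat ?N ?N" "adj W \<in> carrier_mat ?N ?N" using U by (auto simp: unitary_mat_def)
  have CP: "P \<in> carrier_mat ?N ?N" using P pauli_carrier by blast
  have WW: "adj W * W = 1\<^sub>m ?N" "W * adj W = 1\<^sub>m ?N" using U by (auto simp: unitary_mat_def)
  have "(W * P * adj W) * (W * P * adj W) = W * (P * ((adj W * W) * (P * adj W)))"
    using CW CP by (simp add: a3[of _ ?N] mult_carrier_mat[of _ ?N ?N _ ?N])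
  also have "\<dots> = W * (P * (P * adj W))" using CW CP by (simp add: WW)
  also have "P * (P * adj W) = (P * P) * adj W" using a3[OF CP CP CW(2)] by simp
  also have "(P * P) * adj W = (-1::complex)^e \<cdot>\<^sub>m adj W"
    unfolding e using CW by (simp add: mult_smult_assoc_mat[of _ ?N ?N _ ?N])
  also have "W * ((-1::complex)^e \<cdot>\<^sub>m adj W) = (-1::complex)^e \<cdot>\<^sub>m (W * adj W)"
    using CW by (simp add: mult_smult_distrib[of _ ?N ?N _ ?N])
  finally show ?thesis unfolding WW by (rule exI)
qed

lemma sq_pm1_cnj:
  assumes "z * z = (-1::complex)^m"
  shows "\<exists>d. cnj z = \<i>^d"
proof (cases "even m")
  case True
  then have "z * z = 1" using assms by simp
  then have "(z - 1) * (z + 1) = 0" by (simp add: algebra_simps)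
  then have "z - 1 = 0 \<or> z + 1 = 0" by simp
  then have "z = 1 \<or> z = -1" by (auto simp: eq_neg_iff_add_eq_0)
  then show ?thesis
  proof
    assume "z = 1" then show ?thesis by (intro exI[of _ 0]) simp
  next
    assume "z = -1" then show ?thesis by (intro exI[of _ 2]) simp
  qed
next
  case False
  then have "z * z = -1" using assms by simp
  then have "(z - \<i>) * (z + \<i>) = 0" by (simp add: algebra_simps)
  then have "z - \<i> = 0 \<or> z + \<i> = 0" by simp
  then have "z = \<i> \<or> z = -\<i>" by (auto simp: eq_neg_iff_add_eq_0)
  then show ?thesis
  proof
    assume "z = \<i>" then show ?thesis by (intro exI[of _ 3]) (simp add: power3_eq_cube)
  next
    assume "z = -\<i>" then show ?thesis by (intro exI[of _ 1]) simp
  qed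
qed

lemma CH_conj_pauli:
  assumes l: "1 \<le> l" and U: "unitary_mat (2^n) W" and P: "P \<in> pauli_group n"
    and z: "cmod z = 1" and in_l: "z \<cdot>\<^sub>m (W * P * adj W) \<in> CH n l"
  shows "W * P * adj W \<in> CH n l"
proof -
  let ?N = "2^n" and ?M = "W * P * adj W"
  have CW: "W \<in> carrier_mat ?N ?N" "adj W \<in> carrier_mat ?N ?N" using U by (auto simp: unitary_mat_def)
  have CP: "P \<in> carrier_mat ?N ?N" using P pauli_carrier by blast
  have CM: "?M \<in> carrier_mat ?N ?N" using mult_carrier_mat[OF mult_carrier_mat[OF CW(1) CP] CW(2)] .
  show ?thesis
  proof (cases l)
    case 0 then show ?thesis using l by simp
  next
    case (Suc k)
    show ?thesis
    proof (cases k)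
      case (Suc k')
      have "uptoph n l ?M" unfolding uptoph_def using z in_l by blast
      then show ?thesis using uptoph_SS \<open>l = Suc k\<close> Suc by blast
    next
      case 0
      then have R: "z \<cdot>\<^sub>m ?M \<in> pauli_group n" using in_l \<open>l = Suc k\<close> by simp
      obtain e where e: "?M * ?M = (-1::complex)^e \<cdot>\<^sub>m 1\<^sub>m ?N" using conj_pauli_sq[OF U P] by blast
      obtain f where f: "(z \<cdot>\<^sub>m ?M) * (z \<cdot>\<^sub>m ?M) = (-1::complex)^f \<cdot>\<^sub>m 1\<^sub>m ?N" using pauli_sq[OF R] by blast
      have "(z \<cdot>\<^sub>m ?M) * (z \<cdot>\<^sub>m ?M) = (z * z) \<cdot>\<^sub>m (?M * ?M)"
        using CM by (simp add: mult_smult_distrib[of _ ?N ?N _ ?N] mult_smult_assoc_mat[of _ ?N ?N _ ?N] smult_smult_mat mult.commute)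
      also have "\<dots> = (z * z * (-1)^e) \<cdot>\<^sub>m 1\<^sub>m ?N" unfolding e by (simp add: smult_smult_mat)
      finally have "(z * z * (-1)^e) \<cdot>\<^sub>m 1\<^sub>m ?N = ((-1::complex)^f) \<cdot>\<^sub>m 1\<^sub>m ?N" using f by simp
      then have "((z * z * (-1)^e) \<cdot>\<^sub>m 1\<^sub>m ?N) $$ (0,0) = (((-1::complex)^f) \<cdot>\<^sub>m 1\<^sub>m ?N) $$ (0,0)" by simp
      then have "z * z * (-1)^e = (-1::complex)^f" by simp
      then have "z * z * (-1)^e * (-1)^e = (-1::complex)^f * (-1)^e" by simp
      then have "z * z = (-1::complex)^(f + e)"
        by (simp add: mult.assoc power_add flip: power_add mult_2)
      then obtain d where d: "cnj z = \<i>^d" using sq_pm1_cnj by blast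
      have "?M = cnj z \<cdot>\<^sub>m (z \<cdot>\<^sub>m ?M)"
        using cnj_mult_self[OF z] by (simp add: smult_smult_mat smult_one_mat)
      then have "?M \<in> pauli_group n" using pauli_iphase[OF R] d by metis
      then show ?thesis using \<open>l = Suc k\<close> 0 by simp
    qed
  qed
qed

lemma pauli_1': "P \<in> pauli_group (Suc 0) \<longleftrightarrow> (\<exists>c \<alpha> \<beta>. P = \<i>^c \<cdot>\<^sub>m pz1 \<alpha> \<beta>)"
  using pauli_1 by simp
lemma pz1_pauli': "pz1 \<alpha> \<beta> \<in> pauli_group (Suc 0)"
  using pz1_pauli by simp

lemma tensor_conj:
  assumes "\<And>t. t<n \<Longrightarrow> C t \<in> carrier_mat 2 2" "\<And>t. t<n \<Longrightarrow> D t \<in> carrier_mat 2 2"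
  shows "tensor n C * tensor n D * adj (tensor n C) = tensor n (\<lambda>t. C t * D t * adj (C t))"
proof -
  have "tensor n C * tensor n D = tensor n (\<lambda>t. C t * D t)" by (rule tensor_mult) (use assms in auto)
  moreover have "adj (tensor n C) = tensor n (\<lambda>t. adj (C t))" by (rule tensor_adj) (use assms in auto)
  moreover have "tensor n (\<lambda>t. C t * D t) * tensor n (\<lambda>t. adj (C t)) = tensor n (\<lambda>t. C t * D t * adj (C t))"
    by (rule tensor_mult) (use assms in \<open>auto intro!: mult_carrier_mat[of _ 2 2 _ 2]\<close>)
  ultimately show ?thesis by simp
qed

lemma unitary_nonzero:
  assumes "unitary_mat 2 U"
  shows "\<exists>p q. p < 2 \<and> q < 2 \<and> U $$ (p,q) \<noteq> 0"
proof (rule ccontr)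
  assume "\<not> ?thesis"
  then have z: "\<And>p q. p < 2 \<Longrightarrow> q < 2 \<Longrightarrow> U $$ (p,q) = 0" by auto
  have C: "U \<in> carrier_mat 2 2" "adj U \<in> carrier_mat 2 2" using assms by (auto simp: unitary_mat_def)
  have "(U * adj U) $$ (0,0) = 0" using mult2_index[OF C, of 0 0] z by simp
  moreover have "U * adj U = 1\<^sub>m 2" using assms by (simp add: unitary_mat_def)
  ultimately show False by simp
qed

lemma cnj_prod_one_cmod: "l * cnj l = 1 \<Longrightarrow> cmod l = 1"
proof -
  assume "l * cnj l = 1"
  then have "complex_of_real ((cmod l)^2) = 1" by (simp add: complex_norm_square[symmetric])
  then have "(cmod l)^2 = 1" using of_real_eq_1_iff by blast
  then have "cmod l = 1 \<or> cmod l = -1" by (simp add: power2_eq_1_iff)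
  then show ?thesis using norm_ge_zero[of l] by linarith
qed

lemma HT_up:
  "(\<And>t. t<n \<Longrightarrow> unitary_mat 2 (C t)) \<Longrightarrow> (\<And>t. t<n \<Longrightarrow> uptoph 1 (Suc k) (C t))
   \<Longrightarrow> uptoph n (Suc k) (tensor n C)"
proof (induction k arbitrary: C)
  case 0
  have "\<forall>t. \<exists>z. t < n \<longrightarrow> cmod z = 1 \<and> z \<cdot>\<^sub>m C t \<in> pauli_group 1"
    using "0.prems"(2) by (auto simp: uptoph_def)
  then obtain Z where Z: "\<And>t. t < n \<Longrightarrow> cmod (Z t) = 1 \<and> Z t \<cdot>\<^sub>m C t \<in> pauli_group 1" by metis
  have "tensor n (\<lambda>t. Z t \<cdot>\<^sub>m C t) \<in> pauli_group n"
    by (rule tensor_spi) (use Z in \<open>auto simp: pauli_1 pauli_1'\<close>)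
  moreover have "tensor n (\<lambda>t. Z t \<cdot>\<^sub>m C t) = prod Z {..<n} \<cdot>\<^sub>m tensor n C"
    by (rule tensor_smult) (use "0.prems" in \<open>auto simp: unitary_mat_def\<close>)
  moreover have "cmod (prod Z {..<n}) = 1"
  proof -
    have "cmod (prod Z {..<n}) = (\<Prod>t<n. cmod (Z t))" by (simp add: prod_norm)
    also have "\<dots> = 1" using Z by (intro prod.neutral) auto
    finally show ?thesis .
  qed
  ultimately show ?case unfolding uptoph_def by auto
next
  case (Suc k)
  let ?N = "(2::nat)^n"
  have Ct: "\<And>t. t<n \<Longrightarrow> C t \<in> CH 1 (Suc (Suc k))" using Suc.prems(2) uptoph_SS by blast
  have cC: "\<And>t. t<n \<Longrightarrow> C t \<in> carrier_mat 2 2" using Suc.prems(1) by (auto simp: unitary_mat_def)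
  have U: "unitary_mat ?N (tensor n C)" using Suc.prems(1) tensor_unitary by blast
  have CT: "tensor n C \<in> carrier_mat ?N ?N" "adj (tensor n C) \<in> carrier_mat ?N ?N" by auto
  have main: "tensor n C * P * adj (tensor n C) \<in> CH n (Suc k)" if P: "P \<in> pauli_group n" for P
  proof -
    obtain c a b where Pe: "P = \<i>^c \<cdot>\<^sub>m tensor n (pz a b)" using P pauli_char by blast
    define D where "D t = C t * pz a b t * adj (C t)" for t
    have "tensor n C * P * adj (tensor n C) = \<i>^c \<cdot>\<^sub>m (tensor n C * tensor n (pz a b) * adj (tensor n C))"
    proof -
      have CP: "tensor n C * tensor n (pz a b) \<in> carrier_mat ?N ?N" by (rule mult_carrier_mat) auto
      show ?thesis
        unfolding Pe using CT CP by (simp add: mult_smult_distrib[of _ ?N ?N _ ?N] mult_smult_assoc_mat[of _ ?N ?N _ ?N])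
    qed
    also have "tensor n C * tensor n (pz a b) * adj (tensor n C) = tensor n D"
      unfolding D_def by (rule tensor_conj) (use cC in auto)
    finally have e: "tensor n C * P * adj (tensor n C) = \<i>^c \<cdot>\<^sub>m tensor n D" .
    have "uptoph n (Suc k) (tensor n D)"
    proof (rule Suc.IH)
      fix t assume t: "t < n"
      have Ut: "unitary_mat 2 (C t)" using Suc.prems(1) t by blast
      show "unitary_mat 2 (D t)" unfolding D_def
        by (intro unitary_mult unitary_adj Ut) (simp add: pz_def pz1_unitary)
      have "pz a b t \<in> pauli_group 1" by (simp add: pz_def pz1_pauli pz1_pauli')
      then have "D t \<in> CH 1 (Suc k)" using Ct[OF t] unfolding D_def by simp
      then show "uptoph 1 (Suc k) (D t)" by (rule uptoph_in)
    qed
    then have "uptoph n (Suc k) (tensor n C * P * adj (tensor n C))"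
      unfolding e by (rule uptoph_smult) (rule cmod_ipow)
    then obtain z where "cmod z = 1" "z \<cdot>\<^sub>m (tensor n C * P * adj (tensor n C)) \<in> CH n (Suc k)"
      by (auto simp: uptoph_def)
    then show ?thesis using CH_conj_pauli[OF _ U P] by simp
  qed
  have "tensor n C \<in> CH n (Suc (Suc k))" using U main by simp
  then show ?case by (rule uptoph_in)
qed

lemma HT_down:
  "(\<And>t. t<n \<Longrightarrow> unitary_mat 2 (C t)) \<Longrightarrow> uptoph n (Suc k) (tensor n C) \<Longrightarrow> t < n
   \<Longrightarrow> uptoph 1 (Suc k) (C t)"
proof (induction k arbitrary: C t)
  case 0
  let ?N = "(2::nat)^n"
  obtain z where z: "cmod z = 1" "z \<cdot>\<^sub>m tensor n C \<in> pauli_group n"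
    using "0.prems"(2) by (auto simp: uptoph_def)
  obtain c a b where e: "z \<cdot>\<^sub>m tensor n C = \<i>^c \<cdot>\<^sub>m tensor n (pz a b)" using z(2) pauli_char by blast
  have "tensor n C = cnj z \<cdot>\<^sub>m (z \<cdot>\<^sub>m tensor n C)"
    using cnj_mult_self[OF z(1)] by (simp add: smult_smult_mat smult_one_mat)
  also have "\<dots> = (cnj z * \<i>^c) \<cdot>\<^sub>m tensor n (pz a b)" unfolding e by (simp add: smult_smult_mat)
  finally have e2: "tensor n C = (cnj z * \<i>^c) \<cdot>\<^sub>m tensor n (pz a b)" .
  have cC: "\<And>t. t<n \<Longrightarrow> C t \<in> carrier_mat 2 2" using "0.prems"(1) by (auto simp: unitary_mat_def)
  obtain l where lam: "C t = l \<cdot>\<^sub>m pz a b t"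
    using tensor_extract[OF cC _ _ e2 "0.prems"(3)] unitary_nonzero "0.prems"(1) by auto
  have Ut: "unitary_mat 2 (C t)" using "0.prems" by blast
  have "C t * adj (C t) = (l * cnj l) \<cdot>\<^sub>m (pz a b t * adj (pz a b t))"
    unfolding lam adj_smult
    by (simp add: mult_smult_distrib[of _ 2 2 _ 2] mult_smult_assoc_mat[of _ 2 2 _ 2] smult_smult_mat mult.commute)
  also have "pz a b t * adj (pz a b t) = 1\<^sub>m 2" using pz1_unitary by (simp add: pz_def unitary_mat_def)
  finally have "(l * cnj l) \<cdot>\<^sub>m 1\<^sub>m 2 = 1\<^sub>m 2" using Ut by (simp add: unitary_mat_def)
  then have "((l * cnj l) \<cdot>\<^sub>m 1\<^sub>m 2) $$ (0,0) = (1\<^sub>m 2 :: complex mat) $$ (0,0)" by simp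
  then have "l * cnj l = 1" by simp
  then have l1: "cmod l = 1" by (rule cnj_prod_one_cmod)
  have "cnj l \<cdot>\<^sub>m C t = pz a b t"
    unfolding lam using cnj_mult_self[OF l1] by (simp add: smult_smult_mat smult_one_mat)
  then have "cnj l \<cdot>\<^sub>m C t \<in> CH 1 (Suc 0)" by (simp add: pz_def pz1_pauli pz1_pauli')
  then show ?case unfolding uptoph_def using l1 by (intro exI[of _ "cnj l"]) simp
next
  case (Suc k)
  have cC: "\<And>t. t<n \<Longrightarrow> C t \<in> carrier_mat 2 2" using Suc.prems(1) by (auto simp: unitary_mat_def)
  have TC: "tensor n C \<in> CH n (Suc (Suc k))" using Suc.prems(2) uptoph_SS by blast
  have Ut: "unitary_mat 2 (C t)" using Suc.prems by blast
  have Ct2: "C t \<in> carrier_mat 2 2" "adj (C t) \<in> carrier_mat 2 2" using Ut by (auto simp: unitary_mat_def)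
  have main: "C t * P * adj (C t) \<in> CH 1 (Suc k)" if P: "P \<in> pauli_group 1" for P
  proof -
    obtain c \<alpha> \<beta> where Pe: "P = \<i>^c \<cdot>\<^sub>m pz1 \<alpha> \<beta>" using P pauli_1 by blast
    define D where "D s = (if s = t then pz1 \<alpha> \<beta> else 1\<^sub>m 2)" for s
    have cD: "\<And>s. D s \<in> carrier_mat 2 2" by (simp add: D_def)
    have "tensor n D \<in> pauli_group n"
    proof (rule tensor_spi)
      fix s
      show "\<exists>c \<alpha>' \<beta>'. D s = \<i>^c \<cdot>\<^sub>m pz1 \<alpha>' \<beta>'"
        by (rule exI[of _ 0]) (auto simp: D_def smult_one_mat pz1_FF[symmetric])
    qed
    then have "tensor n C * tensor n D * adj (tensor n C) \<in> CH n (Suc k)" using TC by simp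
    also have "tensor n C * tensor n D * adj (tensor n C) = tensor n (\<lambda>s. C s * D s * adj (C s))"
      by (rule tensor_conj) (use cC cD in auto)
    finally have "uptoph n (Suc k) (tensor n (\<lambda>s. C s * D s * adj (C s)))" by (rule uptoph_in)
    then have "uptoph 1 (Suc k) (C t * D t * adj (C t))"
    proof (rule Suc.IH[rotated])
      show "t < n" by (rule Suc.prems(3))
      fix s assume s: "s < n"
      have "unitary_mat 2 (D s)"
        by (cases "s = t") (simp_all add: D_def pz1_unitary, simp add: unitary_mat_def)
      then show "unitary_mat 2 (C s * D s * adj (C s))" using Suc.prems(1)[OF s]
        by (intro unitary_mult unitary_adj)
    qed
    then obtain z where z: "cmod z = 1" "z \<cdot>\<^sub>m (C t * pz1 \<alpha> \<beta> * adj (C t)) \<in> CH 1 (Suc k)"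
      by (auto simp: uptoph_def D_def)
    have in1: "C t * pz1 \<alpha> \<beta> * adj (C t) \<in> CH 1 (Suc k)"
      using CH_conj_pauli[of "Suc k" 1 "C t" "pz1 \<alpha> \<beta>" z] Ut z pz1_pauli by simp
    have "C t * P * adj (C t) = \<i>^c \<cdot>\<^sub>m (C t * pz1 \<alpha> \<beta> * adj (C t))"
      unfolding Pe using Ct2 by (simp add: mult_smult_distrib[of _ 2 2 _ 2] mult_smult_assoc_mat[of _ 2 2 _ 2])
    then show ?thesis using CH_iphase[OF _ in1] by simp
  qed
  have "C t \<in> CH 1 (Suc (Suc k))" using main Ut by simp
  then show ?case by (rule uptoph_in)
qed

lemma cancel_l:
  assumes "unitary_mat N W" "X \<in> carrier_mat N N"
  shows "adj W * (W * X) = X"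
proof -
  have C: "W \<in> carrier_mat N N" "adj W \<in> carrier_mat N N" using assms by (auto simp: unitary_mat_def)
  have "adj W * (W * X) = (adj W * W) * X" using a3[OF C(2) C(1) assms(2)] by simp
  also have "\<dots> = X" using assms by (simp add: unitary_mat_def)
  finally show ?thesis .
qed

lemma conj_mult:
  assumes U: "unitary_mat N W" and A: "A \<in> carrier_mat N N" and B: "B \<in> carrier_mat N N"
  shows "W * (A * B) * adj W = (W * A * adj W) * (W * B * adj W)"
proof -
  have C: "W \<in> carrier_mat N N" "adj W \<in> carrier_mat N N" using U by (auto simp: unitary_mat_def)
  have BW: "B * adj W \<in> carrier_mat N N" using B C by simp
  have "(W * A * adj W) * (W * B * adj W) = W * (A * (adj W * (W * (B * adj W))))"
    using A B C by (simp add: a3[of _ N] mult_carrier_mat[of _ N N _ N])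
  also have "adj W * (W * (B * adj W)) = B * adj W" by (rule cancel_l[OF U BW])
  also have "W * (A * (B * adj W)) = W * (A * B) * adj W"
    using A B C by (simp add: a3[of _ N] mult_carrier_mat[of _ N N _ N])
  finally show ?thesis by simp
qed

lemma pauli1_carrier: "P \<in> pauli_group (Suc 0) \<Longrightarrow> P \<in> carrier_mat 2 2"
  using pauli_carrier[of P 1] by simp

lemma one_qubit_step:
  fixes W S R V :: "complex mat" and w :: complex and k :: nat
  assumes V: "V = adj W * adj W"
    and U: "unitary_mat 2 W" and in3: "W \<in> CH 1 (Suc (Suc (Suc k)))" and notin2: "W \<notin> CH 1 (Suc (Suc k))"
    and S: "S \<in> pauli_group 1" and R: "R \<in> pauli_group 1" and RR: "R * R = 1\<^sub>m 2"
    and w: "cmod w = 1"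
    and WS: "W * S * adj W = S" and WR: "W * R * adj W = w \<cdot>\<^sub>m (R * V)"
    and dec: "\<And>\<alpha> \<beta>. \<exists>c x y. pz1 \<alpha> \<beta> = \<i>^c \<cdot>\<^sub>m ((if x then S else 1\<^sub>m 2) * (if y then R else 1\<^sub>m 2))"
  shows "V \<in> CH 1 (Suc (Suc k)) \<and> V \<notin> CH 1 (Suc k)"
proof -
  have CW: "W \<in> carrier_mat 2 2" "adj W \<in> carrier_mat 2 2" using U by (auto simp: unitary_mat_def)
  have CS: "S \<in> carrier_mat 2 2" and CR: "R \<in> carrier_mat 2 2" using S R pauli1_carrier by auto
  have CV: "V \<in> carrier_mat 2 2" unfolding V using mult_carrier_mat[OF CW(2) CW(2)] .
  have S': "S \<in> pauli_group (Suc 0)" and R': "R \<in> pauli_group (Suc 0)" using S R by auto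
  have "W * R * adj W \<in> CH 1 (Suc (Suc k))" using in3 R by simp
  then have "w \<cdot>\<^sub>m (R * V) \<in> CH 1 (Suc (Suc k))" using WR by simp
  then have "cnj w \<cdot>\<^sub>m (w \<cdot>\<^sub>m (R * V)) \<in> CH 1 (Suc (Suc k))" by (rule CH_phase) (use w in simp)
  then have RV: "R * V \<in> CH 1 (Suc (Suc k))"
    using cnj_mult_self[OF w] by (simp add: smult_smult_mat smult_one_mat)
  have "R * (R * V) \<in> CH 1 (Suc (Suc k))" using CH_pmult[OF RV R] by blast
  moreover have "R * (R * V) = V" using a3[OF CR CR CV] RR CV by simp
  ultimately have V2: "V \<in> CH 1 (Suc (Suc k))" by simp
  have V1: "V \<notin> CH 1 (Suc k)"
  proof
    assume V1: "V \<in> CH 1 (Suc k)"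
    have RV1: "R * V \<in> CH 1 (Suc k)" using CH_pmult[OF V1 R] by blast
    have key: "W * pz1 \<alpha> \<beta> * adj W \<in> CH 1 (Suc k)" for \<alpha> \<beta>
    proof -
      obtain c x y where d: "pz1 \<alpha> \<beta> = \<i>^c \<cdot>\<^sub>m ((if x then S else 1\<^sub>m 2) * (if y then R else 1\<^sub>m 2))"
        using dec by blast
      define Sx where "Sx = (if x then S else 1\<^sub>m 2)"
      define Ry where "Ry = (if y then R else 1\<^sub>m 2)"
      have Sxp: "Sx \<in> pauli_group 1" unfolding Sx_def using S pz1_pauli[of False False] by (simp add: pz1_FF)
      have CSx: "Sx \<in> carrier_mat 2 2" and CRy: "Ry \<in> carrier_mat 2 2" using CS CR by (auto simp: Sx_def Ry_def)
      have WSx: "W * Sx * adj W = Sx" unfolding Sx_def using WS U by (auto simp: unitary_mat_def)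
      have e1: "W * (Sx * Ry) * adj W = Sx * (W * Ry * adj W)"
        using conj_mult[OF U CSx CRy] WSx by simp
      have CP: "W * pz1 \<alpha> \<beta> * adj W = \<i>^c \<cdot>\<^sub>m (W * (Sx * Ry) * adj W)"
        unfolding d Sx_def[symmetric] Ry_def[symmetric] using CW CSx CRy
        by (simp add: mult_smult_distrib[of _ 2 2 _ 2] mult_smult_assoc_mat[of _ 2 2 _ 2])
      show ?thesis
      proof (cases y)
        case False
        then have "W * Ry * adj W = 1\<^sub>m 2" unfolding Ry_def using U by (simp add: unitary_mat_def right_mult_one_mat[OF CW(1)])
        then have "W * pz1 \<alpha> \<beta> * adj W = \<i>^c \<cdot>\<^sub>m Sx" using CP e1 CSx by simp
        then have "W * pz1 \<alpha> \<beta> * adj W \<in> pauli_group 1" using pauli_iphase[OF Sxp] by simp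
        then show ?thesis using CH_mono[of 1 "Suc k" 1] by auto
      next
        case True
        then have "W * Ry * adj W = w \<cdot>\<^sub>m (R * V)" unfolding Ry_def using WR by simp
        then have "W * pz1 \<alpha> \<beta> * adj W = \<i>^c \<cdot>\<^sub>m (Sx * (w \<cdot>\<^sub>m (R * V)))" using CP e1 by simp
        also have "Sx * (w \<cdot>\<^sub>m (R * V)) = w \<cdot>\<^sub>m (Sx * (R * V))"
          using CSx CR CV by (simp add: mult_smult_distrib[of _ 2 2 _ 2])
        finally have e1': "W * pz1 \<alpha> \<beta> * adj W = (\<i>^c * w) \<cdot>\<^sub>m (Sx * (R * V))"
          by (simp add: smult_smult_mat)
        have ww: "cnj w * (\<i>^c * w) = \<i>^c"
          using cnj_mult_self[OF w] by (metis mult.commute mult.left_commute mult_1_right)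
        have e2: "cnj w \<cdot>\<^sub>m (W * pz1 \<alpha> \<beta> * adj W) = \<i>^c \<cdot>\<^sub>m (Sx * (R * V))"
          unfolding e1' smult_smult_mat ww ..
        have "Sx * (R * V) \<in> CH 1 (Suc k)" using CH_pmult[OF RV1 Sxp] by blast
        then have "cnj w \<cdot>\<^sub>m (W * pz1 \<alpha> \<beta> * adj W) \<in> CH 1 (Suc k)" unfolding e2 by (intro CH_iphase) auto
        then show ?thesis using CH_conj_pauli[of "Suc k" 1 W "pz1 \<alpha> \<beta>" "cnj w"] U w pz1_pauli by simp
      qed
    qed
    have "W \<in> CH 1 (Suc (Suc k))"
    proof -
      have "W * P * adj W \<in> CH 1 (Suc k)" if P: "P \<in> pauli_group 1" for P
      proof -
        obtain c \<alpha> \<beta> where Pe: "P = \<i>^c \<cdot>\<^sub>m pz1 \<alpha> \<beta>" using P pauli_1 by blast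
        have "W * P * adj W = \<i>^c \<cdot>\<^sub>m (W * pz1 \<alpha> \<beta> * adj W)"
          unfolding Pe using CW by (simp add: mult_smult_distrib[of _ 2 2 _ 2] mult_smult_assoc_mat[of _ 2 2 _ 2])
        then show ?thesis using CH_iphase[OF _ key] by simp
      qed
      then show ?thesis using U by simp
    qed
    then show False using notin2 by blast
  qed
  show ?thesis using V2 V1 by blast
qed

lemma pauli_dims[simp]: "dim_row pauli_X = 2" "dim_col pauli_X = 2" "dim_row pauli_Z = 2" "dim_col pauli_Z = 2"
  by (simp_all add: pauli_X_def pauli_Z_def)

lemma X_pz1: "pz1 True False = pauli_X" by (simp add: pz1_def)
lemma Z_pz1: "pz1 False True = pauli_Z" by (simp add: pz1_def)

lemma XX: "pauli_X * pauli_X = 1\<^sub>m 2" using pz1_sq[of True False] by (simp add: X_pz1 smult_one_mat)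
lemma ZZ: "pauli_Z * pauli_Z = 1\<^sub>m 2" using pz1_sq[of False True] by (simp add: Z_pz1 smult_one_mat)

lemma Zconj_index:
  assumes "W \<in> carrier_mat 2 2" "p < 2" "q < 2"
  shows "(pauli_Z * W * pauli_Z) $$ (p,q) = (if p = q then 1 else -1) * W $$ (p,q)"
proof -
  have c: "pauli_Z * W \<in> carrier_mat 2 2" using mult_carrier_mat[OF pauli_Z_carrier assms(1)] .
  show ?thesis using assms
    by (auto simp: mult2_index[OF c] mult2_index[OF pauli_Z_carrier assms(1)] pauli_Z_index less_2_cases_iff
        simp del: index_mult_mat)
qed

lemma Xconj_index:
  assumes "W \<in> carrier_mat 2 2" "p < 2" "q < 2"
  shows "(pauli_X * W * pauli_X) $$ (p,q) = W $$ (1 - p, 1 - q)"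
proof -
  have c: "pauli_X * W \<in> carrier_mat 2 2" using mult_carrier_mat[OF pauli_X_carrier assms(1)] .
  show ?thesis using assms
    by (auto simp: mult2_index[OF c] mult2_index[OF pauli_X_carrier assms(1)] pauli_X_index less_2_cases_iff
        simp del: index_mult_mat)
qed

lemma WX_index: "W \<in> carrier_mat 2 2 \<Longrightarrow> p < 2 \<Longrightarrow> q < 2 \<Longrightarrow> (W * pauli_X) $$ (p,q) = W $$ (p, 1 - q)"
  by (auto simp: mult2_index pauli_X_index less_2_cases_iff simp del: index_mult_mat)
lemma XW_index: "W \<in> carrier_mat 2 2 \<Longrightarrow> p < 2 \<Longrightarrow> q < 2 \<Longrightarrow> (pauli_X * W) $$ (p,q) = W $$ (1 - p, q)"
  by (auto simp: mult2_index pauli_X_index less_2_cases_iff simp del: index_mult_mat)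
lemma WZ_index: "W \<in> carrier_mat 2 2 \<Longrightarrow> p < 2 \<Longrightarrow> q < 2 \<Longrightarrow> (W * pauli_Z) $$ (p,q) = W $$ (p, q) * (if q = 0 then 1 else -1)"
  by (auto simp: mult2_index pauli_Z_index less_2_cases_iff simp del: index_mult_mat)
lemma ZW_index: "W \<in> carrier_mat 2 2 \<Longrightarrow> p < 2 \<Longrightarrow> q < 2 \<Longrightarrow> (pauli_Z * W) $$ (p,q) = (if p = 0 then 1 else -1) * W $$ (p, q)"
  by (auto simp: mult2_index pauli_Z_index less_2_cases_iff simp del: index_mult_mat)

lemma mv2_index: "W \<in> carrier_mat 2 2 \<Longrightarrow> v \<in> carrier_vec 2 \<Longrightarrow> p < 2 \<Longrightarrow> (W *\<^sub>v v) $ p = W $$ (p,0) * v $ 0 + W $$ (p,1) * v $ 1"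
  by (simp add: mult_mat_vec_def scalar_prod_def numeral_2_eq_2)

lemma conj_formula:
  assumes U: "unitary_mat 2 W" and R: "R \<in> carrier_mat 2 2" and RR: "R * R = 1\<^sub>m 2"
    and RWR: "R * W * R = w \<cdot>\<^sub>m adj W"
  shows "W * R * adj W = w \<cdot>\<^sub>m (R * (adj W * adj W))"
proof -
  have C: "W \<in> carrier_mat 2 2" "adj W \<in> carrier_mat 2 2" using U by (auto simp: unitary_mat_def)
  have "W * R * adj W = (R * R) * W * R * adj W" using C R RR by simp
  also have "\<dots> = R * (R * W * R) * adj W"
    using C R by (simp add: a3[of _ 2] mult_carrier_mat[of _ 2 2 _ 2])
  also have "\<dots> = R * (w \<cdot>\<^sub>m adj W) * adj W" unfolding RWR ..
  also have "\<dots> = w \<cdot>\<^sub>m (R * (adj W * adj W))"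
    using C R by (simp add: mult_smult_distrib[of _ 2 2 _ 2] mult_smult_assoc_mat[of _ 2 2 _ 2] a3[of _ 2])
  finally show ?thesis .
qed

lemma comm_formula:
  assumes U: "unitary_mat 2 W" and S: "S \<in> carrier_mat 2 2" and WS: "W * S = S * W"
  shows "W * S * adj W = S"
proof -
  have C: "W \<in> carrier_mat 2 2" "adj W \<in> carrier_mat 2 2" using U by (auto simp: unitary_mat_def)
  have "W * S * adj W = S * (W * adj W)" using C S WS by (simp add: a3[of _ 2])
  then show ?thesis using U S by (simp add: unitary_mat_def)
qed

lemma plus_case:
  assumes U: "unitary_mat 2 W" and fx: "W *\<^sub>v vec 2 (\<lambda>_. 1) = vec 2 (\<lambda>_. 1)"
  shows "\<exists>w. cmod w = 1 \<and> W * pauli_X * adj W = pauli_X \<and> W * pauli_Z * adj W = w \<cdot>\<^sub>m (pauli_Z * (adj W * adj W))"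
proof -
  let ?v = "vec 2 (\<lambda>_. 1) :: complex vec"
  have C: "W \<in> carrier_mat 2 2" "adj W \<in> carrier_mat 2 2" using U by (auto simp: unitary_mat_def)
  have fix2: "adj W *\<^sub>v ?v = ?v"
  proof -
    have "adj W *\<^sub>v ?v = adj W *\<^sub>v (W *\<^sub>v ?v)" using fx by simp
    also have "\<dots> = (adj W * W) *\<^sub>v ?v" using C by (simp add: assoc_mult_mat_vec[of _ 2 2 _ 2])
    also have "\<dots> = ?v" using U by (simp add: unitary_mat_def)
    finally show ?thesis .
  qed
  define a where "a = W $$ (0,0)"
  define b where "b = W $$ (0,1)"
  define c where "c = W $$ (1,0)"
  define d where "d = W $$ (1,1)"
  have e1: "a + b = 1" "c + d = 1"
    using arg_cong[OF fx, of "\<lambda>x. x $ 0"] arg_cong[OF fx, of "\<lambda>x. x $ 1"] C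
    by (auto simp: mv2_index a_def b_def c_def d_def simp del: index_mult_mat_vec)
  have e2: "cnj a + cnj c = 1" "cnj b + cnj d = 1"
    using arg_cong[OF fix2, of "\<lambda>x. x $ 0"] arg_cong[OF fix2, of "\<lambda>x. x $ 1"] C
    by (auto simp: mv2_index a_def b_def c_def d_def adj_index2 simp del: index_mult_mat_vec)
  have WW: "W * adj W = 1\<^sub>m 2" using U by (simp add: unitary_mat_def)
  have e3: "a * cnj c + b * cnj d = 0"
    using arg_cong[OF WW, of "\<lambda>M. M $$ (0,1)"] C
    by (simp add: mult2_index adj_index2 a_def b_def c_def d_def del: index_mult_mat)
  have "a + c = 1" using arg_cong[OF e2(1), of cnj] by simp
  then have cb: "c = b" using e1(1) by (metis add_left_imp_eq)
  have "b + d = 1" using arg_cong[OF e2(2), of cnj] by simp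
  then have da: "d = a" using e1(1) by (metis add.commute add_left_imp_eq)
  have h1: "cnj a + cnj b = 1" using e2 cb by simp
  have h2: "b * cnj a = - (a * cnj b)" using e3 cb da by (simp add: eq_neg_iff_add_eq_0 add.commute mult.commute)
  define w where "w = a - b"
  have wa: "w * cnj a = a"
  proof -
    have "w * cnj a = a * cnj a - b * cnj a" by (simp add: w_def algebra_simps)
    also have "\<dots> = a * (cnj a + cnj b)" using h2 by (simp add: algebra_simps)
    finally show ?thesis using h1 by simp
  qed
  have wb: "w * cnj b = - b"
  proof -
    have "w * cnj b = a * cnj b - b * cnj b" by (simp add: w_def algebra_simps)
    also have "\<dots> = - b * (cnj a + cnj b)" using h2 by (simp add: algebra_simps)
    finally show ?thesis using h1 by simp
  qed
  have ww: "w * cnj w = 1"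
  proof -
    have "w * cnj w = w * cnj a - w * cnj b" by (simp add: w_def algebra_simps)
    then show ?thesis using wa wb e1 by simp
  qed
  have RWR: "pauli_Z * W * pauli_Z = w \<cdot>\<^sub>m adj W"
  proof (rule eq_matI)
    fix i j assume "i < dim_row (w \<cdot>\<^sub>m adj W)" "j < dim_col (w \<cdot>\<^sub>m adj W)"
    then have ij: "i < 2" "j < 2" using C by auto
    show "(pauli_Z * W * pauli_Z) $$ (i,j) = (w \<cdot>\<^sub>m adj W) $$ (i,j)"
      unfolding Zconj_index[OF C(1) ij] using ij C wa wb cb da
      by (auto simp: adj_index2 less_2_cases_iff a_def b_def c_def d_def)
  qed (use C in simp_all)
  have WS: "W * pauli_X = pauli_X * W"
  proof (rule eq_matI)
    fix i j assume "i < dim_row (pauli_X * W)" "j < dim_col (pauli_X * W)"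
    then have ij: "i < 2" "j < 2" using C by auto
    show "(W * pauli_X) $$ (i,j) = (pauli_X * W) $$ (i,j)"
      unfolding WX_index[OF C(1) ij] XW_index[OF C(1) ij] using ij cb da
      by (auto simp: less_2_cases_iff a_def b_def c_def d_def)
  qed (use C in simp_all)
  show ?thesis
    using conj_formula[OF U pauli_Z_carrier ZZ RWR] comm_formula[OF U pauli_X_carrier WS] cnj_prod_one_cmod[OF ww]
    by blast
qed

lemma zero_case:
  assumes U: "unitary_mat 2 W" and fx: "W *\<^sub>v vec 2 (\<lambda>i. if i = 0 then 1 else 0) = vec 2 (\<lambda>i. if i = 0 then 1 else 0)"
  shows "\<exists>w. cmod w = 1 \<and> W * pauli_Z * adj W = pauli_Z \<and> W * pauli_X * adj W = w \<cdot>\<^sub>m (pauli_X * (adj W * adj W))"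
proof -
  have C: "W \<in> carrier_mat 2 2" "adj W \<in> carrier_mat 2 2" using U by (auto simp: unitary_mat_def)
  have a: "W $$ (0,0) = 1" and c: "W $$ (1,0) = 0"
    using arg_cong[OF fx, of "\<lambda>x. x $ 0"] arg_cong[OF fx, of "\<lambda>x. x $ 1"] C
    by (auto simp: mv2_index simp del: index_mult_mat_vec)
  have WW: "W * adj W = 1\<^sub>m 2" using U by (simp add: unitary_mat_def)
  have "W $$ (0,0) * cnj (W $$ (0,0)) + W $$ (0,1) * cnj (W $$ (0,1)) = 1"
    using arg_cong[OF WW, of "\<lambda>M. M $$ (0,0)"] C
    by (simp add: mult2_index adj_index2 del: index_mult_mat)
  then have "W $$ (0,1) * cnj (W $$ (0,1)) = 0" using a by simp
  then have b: "W $$ (0,1) = 0" by simp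
  have "W $$ (1,0) * cnj (W $$ (1,0)) + W $$ (1,1) * cnj (W $$ (1,1)) = 1"
    using arg_cong[OF WW, of "\<lambda>M. M $$ (1,1)"] C
    by (simp add: mult2_index adj_index2 del: index_mult_mat)
  then have dd: "W $$ (1,1) * cnj (W $$ (1,1)) = 1" using c by simp
  define w where "w = W $$ (1,1)"
  have RWR: "pauli_X * W * pauli_X = w \<cdot>\<^sub>m adj W"
  proof (rule eq_matI)
    fix i j assume "i < dim_row (w \<cdot>\<^sub>m adj W)" "j < dim_col (w \<cdot>\<^sub>m adj W)"
    then have ij: "i < 2" "j < 2" using C by auto
    show "(pauli_X * W * pauli_X) $$ (i,j) = (w \<cdot>\<^sub>m adj W) $$ (i,j)"
      unfolding Xconj_index[OF C(1) ij] using ij C a b c dd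
      by (auto simp: adj_index2 less_2_cases_iff w_def mult.commute)
  qed (use C in simp_all)
  have WS: "W * pauli_Z = pauli_Z * W"
  proof (rule eq_matI)
    fix i j assume "i < dim_row (pauli_Z * W)" "j < dim_col (pauli_Z * W)"
    then have ij: "i < 2" "j < 2" using C by auto
    show "(W * pauli_Z) $$ (i,j) = (pauli_Z * W) $$ (i,j)"
      unfolding WZ_index[OF C(1) ij] ZW_index[OF C(1) ij] using ij b c
      by (auto simp: less_2_cases_iff)
  qed (use C in simp_all)
  show ?thesis
    using conj_formula[OF U pauli_X_carrier XX RWR] comm_formula[OF U pauli_Z_carrier WS] cnj_prod_one_cmod[OF dd]
    unfolding w_def by blast
qed

lemma f2_add_empty[simp]: "f2_add {} a = a" "f2_add a {} = a" by (auto simp: f2_add_def)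

lemma split_single:
  assumes S: "f2_subspace n S" and t: "{t} \<in> S"
  shows "subspace_splits n S {t}"
proof -
  have tn: "t < n" using S t by (auto simp: f2_subspace_def)
  define S2 where "S2 = {a \<in> S. t \<notin> a}"
  have sub1: "f2_subspace n {{}, {t}}" using tn by (auto simp: f2_subspace_def f2_add_def)
  have sub2: "f2_subspace n S2" using S unfolding S2_def f2_subspace_def by (auto simp: f2_add_def)
  have eq: "S = {f2_add a1 a2 | a1 a2. a1 \<in> {{}, {t}} \<and> a2 \<in> S2}"
  proof
    show "S \<subseteq> {f2_add a1 a2 | a1 a2. a1 \<in> {{}, {t}} \<and> a2 \<in> S2}"
    proof
      fix s assume s: "s \<in> S"
      show "s \<in> {f2_add a1 a2 | a1 a2. a1 \<in> {{}, {t}} \<and> a2 \<in> S2}"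
      proof (cases "t \<in> s")
        case False
        then have "s = f2_add {} s \<and> {} \<in> {{}, {t}} \<and> s \<in> S2" using s unfolding S2_def by simp
        then show ?thesis by blast
      next
        case True
        have "f2_add s {t} \<in> S" using S s t by (auto simp: f2_subspace_def)
        moreover have "f2_add s {t} = s - {t}" using True by (auto simp: f2_add_def)
        moreover have "f2_add {t} (s - {t}) = s" using True by (auto simp: f2_add_def)
        ultimately have "s = f2_add {t} (s - {t}) \<and> {t} \<in> {{}, {t}} \<and> s - {t} \<in> S2"
          unfolding S2_def by simp
        then show ?thesis by blast
      qed
    qed
  next
    show "{f2_add a1 a2 | a1 a2. a1 \<in> {{}, {t}} \<and> a2 \<in> S2} \<subseteq> S"
    proof
      fix x assume "x \<in> {f2_add a1 a2 | a1 a2. a1 \<in> {{}, {t}} \<and> a2 \<in> S2}"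
      then obtain a1 a2 where x: "x = f2_add a1 a2" "a1 \<in> {{}, {t}}" "a2 \<in> S2" by blast
      have "a1 \<in> S" "a2 \<in> S" using x(2,3) S t unfolding S2_def f2_subspace_def by auto
      then show "x \<in> S" using S x(1) unfolding f2_subspace_def by blast
    qed
  qed
  have supp2: "\<forall>a\<in>S2. a \<subseteq> {0..<n} - {t}" using S unfolding S2_def f2_subspace_def by auto
  have supp1: "\<forall>a\<in>{{}, {t}}. a \<subseteq> {t}" by auto
  from sub1 sub2 supp1 supp2 eq show ?thesis unfolding subspace_splits_def by blast
qed

lemma split_trivial:
  assumes S: "f2_subspace n S" and nt: "\<forall>s\<in>S. t \<notin> s"
  shows "subspace_splits n S {t}"
proof -
  have sub1: "f2_subspace n {{}}" by (auto simp: f2_subspace_def)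
  have eq: "S = {f2_add a1 a2 | a1 a2. a1 \<in> {{}} \<and> a2 \<in> S}" by auto
  have supp2: "\<forall>a\<in>S. a \<subseteq> {0..<n} - {t}" using S nt unfolding f2_subspace_def by auto
  have supp1: "\<forall>a\<in>{{}}. a \<subseteq> {t}" by auto
  from sub1 S supp1 supp2 eq show ?thesis unfolding subspace_splits_def by blast
qed

lemma single_proper: "2 \<le> (n::nat) \<Longrightarrow> t < n \<Longrightarrow> {t} \<noteq> {} \<and> {t} \<subset> {0..<n}"
proof -
  assume n: "2 \<le> n" and t: "t < n"
  define u where "u = (if t = 0 then 1 else (0::nat))"
  have u: "u < n" "u \<noteq> t" using n t unfolding u_def by auto
  have "{t} \<subseteq> {0..<n}" using t by simp
  moreover have "{t} \<noteq> {0..<n}" using u by (metis atLeastLessThan_iff le0 singletonD)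
  ultimately show ?thesis by blast
qed

lemma stab_exists:
  assumes css: "is_CSS n A B" and nonsplit: "css_non_splitting n A B" and dist: "css_distance_gt n A B 2"
    and n: "2 \<le> n" and t: "t < n"
  shows "(\<exists>a\<in>A. t \<in> a) \<and> (\<exists>b\<in>B. t \<in> b)"
proof -
  have SA: "f2_subspace n A" and SB: "f2_subspace n B" using css by (auto simp: is_CSS_def)
  have hp: "{t} \<noteq> {} \<and> {t} \<subset> {0..<n}" using single_proper[OF n t] .
  have 1: "\<exists>a\<in>A. t \<in> a"
  proof (rule ccontr)
    assume "\<not> ?thesis"
    then have nt: "\<forall>a\<in>A. t \<notin> a" by auto
    have "{t} \<in> f2_perp n A" using t nt by (auto simp: f2_perp_def f2_dot_zero_def)
    then have "{t} \<in> B"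
    proof -
      assume tp: "{t} \<in> f2_perp n A"
      show "{t} \<in> B"
      proof (rule ccontr)
        assume "{t} \<notin> B"
        then have "2 < card {t}" using dist tp unfolding css_distance_gt_def by blast
        then show False by simp
      qed
    qed
    then have "css_splits n A B {t}"
      unfolding css_splits_def using split_trivial[OF SA nt] split_single[OF SB] by auto
    then show False using nonsplit hp by (auto simp: css_non_splitting_def)
  qed
  have 2: "\<exists>b\<in>B. t \<in> b"
  proof (rule ccontr)
    assume "\<not> ?thesis"
    then have nt: "\<forall>b\<in>B. t \<notin> b" by auto
    have "{t} \<in> f2_perp n B" using t nt by (auto simp: f2_perp_def f2_dot_zero_def)
    then have "{t} \<in> A"
    proof -
      assume tp: "{t} \<in> f2_perp n B"
      show "{t} \<in> A"
      proof (rule ccontr)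
        assume "{t} \<notin> A"
        then have "2 < card {t}" using dist tp unfolding css_distance_gt_def by blast
        then show False by simp
      qed
    qed
    then have "css_splits n A B {t}"
      unfolding css_splits_def using split_trivial[OF SB nt] split_single[OF SA] by auto
    then show False using nonsplit hp by (auto simp: css_non_splitting_def)
  qed
  show ?thesis using 1 2 by blast
qed

lemma subspace_1: "f2_subspace 1 S \<Longrightarrow> S = {{}} \<or> S = {{}, {0}}"
proof -
  assume S: "f2_subspace 1 S"
  have sub: "\<And>x. x \<in> S \<Longrightarrow> x = {} \<or> x = {0}"
  proof -
    fix x assume "x \<in> S"
    then have "x \<subseteq> {0}" using S unfolding f2_subspace_def by auto
    then show "x = {} \<or> x = {0}" by (metis subset_singletonD)
  qed
  have e: "{} \<in> S" using S unfolding f2_subspace_def by blast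
  show ?thesis
  proof (cases "{0} \<in> S")
    case True then have "S = {{}, {0}}" using sub e by blast
    then show ?thesis by blast
  next
    case False then have "S = {{}}" using sub e by blast
    then show ?thesis by blast
  qed
qed

lemma li_mult:
  assumes "logical_identity n A B U" "logical_identity n A B V"
    "U \<in> carrier_mat (2^n) (2^n)" "V \<in> carrier_mat (2^n) (2^n)"
  shows "logical_identity n A B (U * V)"
  unfolding logical_identity_def
proof
  fix \<psi> assume p: "\<psi> \<in> codespace n A B"
  then have c: "\<psi> \<in> carrier_vec (2^n)" by (simp add: codespace_def)
  have "(U * V) *\<^sub>v \<psi> = U *\<^sub>v (V *\<^sub>v \<psi>)" using assms c by simp
  also have "\<dots> = \<psi>" using assms(1,2) p by (simp add: logical_identity_def)
  finally show "(U * V) *\<^sub>v \<psi> = \<psi>" .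
qed

lemma li_adj:
  assumes "logical_identity n A B U" "unitary_mat (2^n) U"
  shows "logical_identity n A B (adj U)"
  unfolding logical_identity_def
proof
  fix \<psi> assume p: "\<psi> \<in> codespace n A B"
  then have c: "\<psi> \<in> carrier_vec (2^n)" by (simp add: codespace_def)
  have C: "U \<in> carrier_mat (2^n) (2^n)" "adj U \<in> carrier_mat (2^n) (2^n)" using assms(2) by (auto simp: unitary_mat_def)
  have "adj U *\<^sub>v \<psi> = adj U *\<^sub>v (U *\<^sub>v \<psi>)" using assms(1) p by (simp add: logical_identity_def)
  also have "\<dots> = (adj U * U) *\<^sub>v \<psi>" using assoc_mult_mat_vec[OF C(2) C(1) c] by simp
  also have "\<dots> = \<psi>" using assms(2) c by (simp add: unitary_mat_def)
  finally show "adj U *\<^sub>v \<psi> = \<psi>" .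
qed

lemma li_X: "a \<in> A \<Longrightarrow> logical_identity n A B (Xpow n a)"
  by (simp add: logical_identity_def codespace_def)
lemma li_Z: "b \<in> B \<Longrightarrow> logical_identity n A B (Zpow n b)"
  by (simp add: logical_identity_def codespace_def)

lemma step_general:
  assumes css: "is_CSS n A B" and nonsplit: "css_non_splitting n A B" and dist: "css_distance_gt n A B 2"
    and n2: "2 \<le> n"
    and Cu: "\<And>t. t<n \<Longrightarrow> unitary_mat 2 (C t)"
    and U3: "tensor n C \<in> CH n (Suc (Suc (Suc k)))"
    and li: "logical_identity n A B (tensor n C)"
    and t: "t < n" and Ct: "C t \<notin> CH 1 (Suc (Suc k))"
  shows "\<exists>V. one_local n V \<and> V \<in> CH n (Suc (Suc k)) \<and> V \<notin> CH n (Suc k) \<and> logical_identity n A B V"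
proof -
  let ?N = "(2::nat)^n"
  let ?U = "tensor n C"
  have Ut: "unitary_mat 2 (C t)" using Cu t by blast
  have Ct2: "C t \<in> carrier_mat 2 2" "adj (C t) \<in> carrier_mat 2 2" using Ut by (auto simp: unitary_mat_def)
  have "\<not> (\<forall>P\<in>pauli_group 1. C t * P * adj (C t) \<in> CH 1 (Suc k))" using Ct Ut by simp
  then obtain P where P: "P \<in> pauli_group 1" and nP: "C t * P * adj (C t) \<notin> CH 1 (Suc k)" by blast
  obtain c \<alpha> \<beta> where Pe: "P = \<i>^c \<cdot>\<^sub>m pz1 \<alpha> \<beta>" using P pauli_1 by blast
  define Q where "Q = pz1 \<alpha> \<beta>"
  have nQ: "C t * Q * adj (C t) \<notin> CH 1 (Suc k)"
  proof
    assume "C t * Q * adj (C t) \<in> CH 1 (Suc k)"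
    then have "\<i>^c \<cdot>\<^sub>m (C t * Q * adj (C t)) \<in> CH 1 (Suc k)" by (intro CH_iphase) auto
    moreover have "C t * P * adj (C t) = \<i>^c \<cdot>\<^sub>m (C t * Q * adj (C t))"
      unfolding Pe Q_def using Ct2 by (simp add: mult_smult_distrib[of _ 2 2 _ 2] mult_smult_assoc_mat[of _ 2 2 _ 2])
    ultimately show False using nP by simp
  qed
  obtain a0 b0 where a0: "a0 \<in> A" "t \<in> a0" and b0: "b0 \<in> B" "t \<in> b0"
    using stab_exists[OF css nonsplit dist n2 t] by blast
  have eA: "{} \<in> A" and eB: "{} \<in> B" using css by (auto simp: is_CSS_def f2_subspace_def)
  define a' where "a' = (if \<alpha> then a0 else {})"
  define b' where "b' = (if \<beta> then b0 else {})"
  have a'A: "a' \<in> A" and b'B: "b' \<in> B" using a0 b0 eA eB by (auto simp: a'_def b'_def)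
  have pzt: "pz a' b' t = Q" using a0 b0 by (auto simp: pz_def Q_def a'_def b'_def)
  define S where "S = tensor n (pz a' b')"
  have SP: "S \<in> pauli_group n" unfolding S_def pauli_char
    by (intro exI[of _ 0] exI[of _ a'] exI[of _ b']) (simp add: smult_one_mat)
  have US: "unitary_mat ?N S" using pauli_unitary[OF SP] .
  have CS: "S \<in> carrier_mat ?N ?N" "adj S \<in> carrier_mat ?N ?N" using US by (auto simp: unitary_mat_def)
  have liS: "logical_identity n A B S" unfolding S_def Xpow_Zpow[symmetric]
    by (rule li_mult[OF li_X[OF a'A] li_Z[OF b'B]]) (simp_all add: Xpow_def Zpow_def)
  have UU: "unitary_mat ?N ?U" using tensor_unitary Cu by blast
  have CU: "?U \<in> carrier_mat ?N ?N" "adj ?U \<in> carrier_mat ?N ?N" using UU by (auto simp: unitary_mat_def)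
  define V where "V = ?U * S * adj ?U * adj S"
  define E where "E s = C s * pz a' b' s * adj (C s) * adj (pz a' b' s)" for s
  have cC: "\<And>s. s<n \<Longrightarrow> C s \<in> carrier_mat 2 2" using Cu by (auto simp: unitary_mat_def)
  have VE: "V = tensor n E"
  proof -
    have "?U * S * adj ?U = tensor n (\<lambda>s. C s * pz a' b' s * adj (C s))"
      unfolding S_def by (rule tensor_conj) (use cC in auto)
    moreover have "adj S = tensor n (\<lambda>s. adj (pz a' b' s))" unfolding S_def by (rule tensor_adj) auto
    moreover have "tensor n (\<lambda>s. C s * pz a' b' s * adj (C s)) * tensor n (\<lambda>s. adj (pz a' b' s)) = tensor n E"
      unfolding E_def by (rule tensor_mult) (use cC in \<open>auto intro!: mult_carrier_mat[of _ 2 2 _ 2]\<close>)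
    ultimately show ?thesis unfolding V_def by simp
  qed
  have UE: "unitary_mat 2 (E s)" if s: "s < n" for s
  proof -
    have u1: "unitary_mat 2 (pz a' b' s)" by (simp add: pz_def pz1_unitary)
    show ?thesis unfolding E_def
      by (intro unitary_mult[OF unitary_mult[OF unitary_mult[OF Cu[OF s] u1] unitary_adj[OF Cu[OF s]]] unitary_adj[OF u1]])
  qed
  have olV: "one_local n V" unfolding one_local_def VE using UE by blast
  have liV: "logical_identity n A B V"
  proof -
    have l1: "logical_identity n A B (?U * S)" by (rule li_mult[OF li liS CU(1) CS(1)])
    have l2: "logical_identity n A B (?U * S * adj ?U)"
      by (rule li_mult[OF l1 li_adj[OF li UU]]) (use CU CS in auto)
    show ?thesis unfolding V_def
      by (rule li_mult[OF l2 li_adj[OF liS US]]) (use CU CS in auto)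
  qed
  have V2: "V \<in> CH n (Suc (Suc k))"
  proof -
    have "?U * S * adj ?U \<in> CH n (Suc (Suc k))" using U3 SP by simp
    then show ?thesis unfolding V_def using CH_pmult pauli_adj[OF SP] by blast
  qed
  have V1: "V \<notin> CH n (Suc k)"
  proof
    assume "V \<in> CH n (Suc k)"
    then have "uptoph n (Suc k) (tensor n E)" using VE uptoph_in by simp
    then have "uptoph 1 (Suc k) (E t)" by (rule HT_down[of n E k t, rotated]) (use UE t in auto)
    then obtain z where z: "cmod z = 1" "z \<cdot>\<^sub>m E t \<in> CH 1 (Suc k)" by (auto simp: uptoph_def)
    have Et: "E t = C t * Q * adj (C t) * adj Q" unfolding E_def pzt ..
    have QP: "Q \<in> pauli_group 1" unfolding Q_def by (rule pz1_pauli)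
    have CQ: "Q \<in> carrier_mat 2 2" "adj Q \<in> carrier_mat 2 2" unfolding Q_def by auto
    have QQ: "adj Q * Q = 1\<^sub>m 2" using pz1_unitary unfolding Q_def unitary_mat_def by blast
    have "(z \<cdot>\<^sub>m E t) * Q \<in> CH 1 (Suc k)" using CH_pmult[OF z(2) QP] by blast
    moreover have "(z \<cdot>\<^sub>m E t) * Q = z \<cdot>\<^sub>m (C t * Q * adj (C t))"
    proof -
      define Y where "Y = C t * Q * adj (C t)"
      have CY: "Y \<in> carrier_mat 2 2" unfolding Y_def
        using mult_carrier_mat[OF mult_carrier_mat[OF Ct2(1) CQ(1)] Ct2(2)] .
      have "(z \<cdot>\<^sub>m (Y * adj Q)) * Q = z \<cdot>\<^sub>m ((Y * adj Q) * Q)"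
        using CY CQ by (simp add: mult_smult_assoc_mat[of _ 2 2 _ 2])
      also have "(Y * adj Q) * Q = Y" using a3[OF CY CQ(2) CQ(1)] QQ CY by simp
      finally show ?thesis unfolding Et Y_def .
    qed
    ultimately have "z \<cdot>\<^sub>m (C t * Q * adj (C t)) \<in> CH 1 (Suc k)" by simp
    then have "C t * Q * adj (C t) \<in> CH 1 (Suc k)"
      using CH_conj_pauli[of "Suc k" 1 "C t" Q z] Ut z(1) QP by simp
    then show False using nQ by simp
  qed
  show ?thesis using olV V2 V1 liV by blast
qed

lemma Xpow1: "Xpow 1 a = (if 0 \<in> a then pauli_X else 1\<^sub>m 2)"
  unfolding Xpow_def by (subst tensor_1) auto
lemma Zpow1: "Zpow 1 b = (if 0 \<in> b then pauli_Z else 1\<^sub>m 2)"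
  unfolding Zpow_def by (subst tensor_1) auto

lemma Xpow1': "Xpow (Suc 0) a = (if 0 \<in> a then pauli_X else 1\<^sub>m 2)" using Xpow1 by simp
lemma Zpow1': "Zpow (Suc 0) b = (if 0 \<in> b then pauli_Z else 1\<^sub>m 2)" using Zpow1 by simp

lemma XZ_ZX: "pauli_X * pauli_Z = \<i>^2 \<cdot>\<^sub>m (pauli_Z * pauli_X)"
proof -
  have "pauli_Z * pauli_X = (-1) \<cdot>\<^sub>m (pauli_X * pauli_Z)"
    using pz1_mult[of False True True False] by (simp add: X_pz1 Z_pz1 pz1_def)
  then have "\<i>^2 \<cdot>\<^sub>m (pauli_Z * pauli_X) = (\<i>^2 * -1) \<cdot>\<^sub>m (pauli_X * pauli_Z)" by (simp add: smult_smult_mat)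
  then show ?thesis by (simp add: smult_one_mat)
qed

lemma step_one:
  assumes css: "is_CSS 1 A B"
    and Cu: "unitary_mat 2 (C 0)"
    and U3: "tensor 1 C \<in> CH 1 (Suc (Suc (Suc k)))" and U2: "tensor 1 C \<notin> CH 1 (Suc (Suc k))"
    and li: "logical_identity 1 A B (tensor 1 C)"
  shows "\<exists>V. one_local 1 V \<and> V \<in> CH 1 (Suc (Suc k)) \<and> V \<notin> CH 1 (Suc k) \<and> logical_identity 1 A B V"
proof -
  define W where "W = C 0"
  have CW: "W \<in> carrier_mat 2 2" "adj W \<in> carrier_mat 2 2" using Cu unfolding W_def unitary_mat_def by auto
  have TW: "tensor 1 C = W" unfolding W_def by (rule tensor_1) (use CW W_def in simp)
  have U: "unitary_mat 2 W" using Cu W_def by simp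
  have U': "unitary_mat (2^1) W" using U by simp
  have W3: "W \<in> CH 1 (Suc (Suc (Suc k)))" and W2: "W \<notin> CH 1 (Suc (Suc k))" and liW: "logical_identity 1 A B W"
    using U3 U2 li TW by auto
  have SA: "f2_subspace 1 A" and SB: "f2_subspace 1 B" using css by (auto simp: is_CSS_def)
  have orth: "\<not> ({0} \<in> A \<and> {0} \<in> B)"
  proof
    assume "{0} \<in> A \<and> {0} \<in> B"
    then have "f2_dot_zero {0} {0}" using css unfolding is_CSS_def by blast
    then show False by (simp add: f2_dot_zero_def)
  qed
  define V where "V = adj W * adj W"
  have CV: "V \<in> carrier_mat 2 2" unfolding V_def using mult_carrier_mat[OF CW(2) CW(2)] .
  have UV: "unitary_mat 2 V" unfolding V_def using unitary_mult[OF unitary_adj[OF U] unitary_adj[OF U]] .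
  have olV: "one_local 1 V"
  proof -
    have "tensor 1 (\<lambda>_. V) = V" by (rule tensor_1) (use CV in simp)
    then show ?thesis unfolding one_local_def using UV by (intro exI[of _ "\<lambda>_. V"]) auto
  qed
  have liV: "logical_identity 1 A B V" unfolding V_def
    by (rule li_mult[OF li_adj[OF liW U'] li_adj[OF liW U']]) (use CW in auto)
  have X1: "pauli_X \<in> pauli_group 1" and Z1: "pauli_Z \<in> pauli_group 1"
    using pz1_pauli[of True False] pz1_pauli[of False True] by (auto simp: X_pz1 Z_pz1)
  consider "A = {{}}" "B = {{}}" | "A = {{}, {0}}" "B = {{}}" | "A = {{}}" "B = {{}, {0}}"
    using subspace_1[OF SA] subspace_1[OF SB] orth by blast
  then show ?thesis
  proof cases
    case 1
    have "W = 1\<^sub>m 2"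
    proof (rule eq_matI)
      fix i j assume ij: "i < dim_row (1\<^sub>m 2 :: complex mat)" "j < dim_col (1\<^sub>m 2 :: complex mat)"
      have "unit_vec 2 j \<in> codespace 1 A B"
        using 1 ij by (auto simp: codespace_def Xpow1 Zpow1 Xpow1' Zpow1')
      then have "W *\<^sub>v unit_vec 2 j = unit_vec 2 j" using liW by (simp add: logical_identity_def)
      then have "(W *\<^sub>v unit_vec 2 j) $ i = unit_vec 2 j $ i" by simp
      moreover have "(W *\<^sub>v unit_vec 2 j) $ i = W $$ (i,j)"
        using CW ij by (simp add: scalar_prod_right_unit)
      ultimately show "W $$ (i,j) = 1\<^sub>m 2 $$ (i,j)" using ij by simp
    qed (use CW in auto)
    then have "W \<in> pauli_group 1" using pz1_pauli[of False False] by (simp add: pz1_FF)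
    then have "W \<in> CH 1 (Suc (Suc k))" using CH_mono[of 1 "Suc (Suc k)" 1] by auto
    then show ?thesis using W2 by blast
  next
    case 2
    let ?v = "vec 2 (\<lambda>_. 1) :: complex vec"
    have Xv: "pauli_X *\<^sub>v ?v = ?v"
      by (rule eq_vecI) (auto simp: pauli_X_def scalar_prod_def numeral_2_eq_2)
    have "?v \<in> codespace 1 A B" using 2 Xv by (auto simp: codespace_def Xpow1 Zpow1 Xpow1' Zpow1')
    then have fx: "W *\<^sub>v ?v = ?v" using liW by (simp add: logical_identity_def)
    obtain w where w: "cmod w = 1" "W * pauli_X * adj W = pauli_X" "W * pauli_Z * adj W = w \<cdot>\<^sub>m (pauli_Z * V)"
      using plus_case[OF U fx] unfolding V_def by blast
    have "V \<in> CH 1 (Suc (Suc k)) \<and> V \<notin> CH 1 (Suc k)"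
    proof (rule one_qubit_step[OF V_def U W3 W2 X1 Z1 ZZ w(1) w(2) w(3)])
      fix \<alpha> \<beta>
      show "\<exists>c x y. pz1 \<alpha> \<beta> = \<i>^c \<cdot>\<^sub>m ((if x then pauli_X else 1\<^sub>m 2) * (if y then pauli_Z else 1\<^sub>m 2))"
        by (rule exI[of _ 0], rule exI[of _ \<alpha>], rule exI[of _ \<beta>]) (simp add: pz1_def smult_one_mat)
    qed
    then show ?thesis using olV liV by blast
  next
    case 3
    let ?v = "vec 2 (\<lambda>i. if i = 0 then 1 else 0) :: complex vec"
    have Zv: "pauli_Z *\<^sub>v ?v = ?v"
      by (rule eq_vecI) (auto simp: pauli_Z_def scalar_prod_def numeral_2_eq_2)
    have "?v \<in> codespace 1 A B" using 3 Zv by (auto simp: codespace_def Xpow1 Zpow1 Xpow1' Zpow1')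
    then have fx: "W *\<^sub>v ?v = ?v" using liW by (simp add: logical_identity_def)
    obtain w where w: "cmod w = 1" "W * pauli_Z * adj W = pauli_Z" "W * pauli_X * adj W = w \<cdot>\<^sub>m (pauli_X * V)"
      using zero_case[OF U fx] unfolding V_def by blast
    have "V \<in> CH 1 (Suc (Suc k)) \<and> V \<notin> CH 1 (Suc k)"
    proof (rule one_qubit_step[OF V_def U W3 W2 Z1 X1 XX w(1) w(2) w(3)])
      fix \<alpha> \<beta>
      show "\<exists>c x y. pz1 \<alpha> \<beta> = \<i>^c \<cdot>\<^sub>m ((if x then pauli_Z else 1\<^sub>m 2) * (if y then pauli_X else 1\<^sub>m 2))"
      proof (cases "\<alpha> \<and> \<beta>")
        case True
        then show ?thesis
          by (intro exI[of _ 2] exI[of _ True]) (simp add: pz1_def XZ_ZX)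
      next
        case False
        then show ?thesis
          by (intro exI[of _ 0] exI[of _ \<beta>] exI[of _ \<alpha>]) (auto simp: pz1_def smult_one_mat)
      qed
    qed
    then show ?thesis using olV liV by blast
  qed
qed

lemma step:
  assumes css: "is_CSS n A B" and nonsplit: "css_non_splitting n A B" and dist: "css_distance_gt n A B 2"
    and ol: "one_local n U" and U3: "U \<in> CH n (Suc (Suc (Suc k)))" and U2: "U \<notin> CH n (Suc (Suc k))"
    and li: "logical_identity n A B U"
  shows "\<exists>V. one_local n V \<and> V \<in> CH n (Suc (Suc k)) \<and> V \<notin> CH n (Suc k) \<and> logical_identity n A B V"
proof -
  obtain C where Cu: "\<And>t. t<n \<Longrightarrow> unitary_mat 2 (C t)" and UC: "U = tensor n C"
    using ol unfolding one_local_def by blast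
  have "\<exists>t<n. C t \<notin> CH 1 (Suc (Suc k))"
  proof (rule ccontr)
    assume "\<not> ?thesis"
    then have "\<And>t. t<n \<Longrightarrow> uptoph 1 (Suc (Suc k)) (C t)" using uptoph_in by auto
    then have "uptoph n (Suc (Suc k)) U" unfolding UC using HT_up[of n C "Suc k"] Cu by blast
    then have "U \<in> CH n (Suc (Suc k))" by (rule uptoph_SS)
    then show False using U2 by blast
  qed
  then obtain t where t: "t < n" "C t \<notin> CH 1 (Suc (Suc k))" by blast
  show ?thesis
  proof (cases "2 \<le> n")
    case True
    show ?thesis by (rule step_general[where t=t]) (use css nonsplit dist True Cu U3 li UC t in auto)
  next
    case False
    then have n1: "n = 1" using t by auto
    show ?thesis using step_one[of A B C k] css Cu U3 U2 li UC n1 by auto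
  qed
qed


theorem theorem1:
  fixes n k :: nat and A B :: "nat set set"
  assumes css: "is_CSS n A B"
    and nonsplit: "css_non_splitting n A B"
    and dist: "css_distance_gt n A B 2"
    and k: "k \<ge> 2"
    and hyp: "\<forall>U. one_local n U \<and> U \<in> clifford_hierarchy n k - clifford_hierarchy n (k - 1)
                 \<longrightarrow> \<not> logical_identity n A B U"
  shows "\<forall>m \<ge> k. \<forall>U. one_local n U \<and> U \<in> clifford_hierarchy n m - clifford_hierarchy n (k - 1)
                 \<longrightarrow> \<not> logical_identity n A B U"
proof (intro allI impI)
  fix m U assume m: "m \<ge> k" and hU: "one_local n U \<and> U \<in> clifford_hierarchy n m - clifford_hierarchy n (k - 1)"
  show "\<not> logical_identity n A B U"
  proof
    assume liU: "logical_identity n A B U"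
    define Pj where "Pj j \<longleftrightarrow> (\<exists>V. one_local n V \<and> V \<in> CH n j \<and> V \<notin> CH n (j - 1) \<and> logical_identity n A B V)" for j
    have down: "Pj (k + d) \<Longrightarrow> Pj k" for d
    proof (induction d)
      case 0 then show ?case by simp
    next
      case (Suc d)
      from Suc.prems obtain V where V: "one_local n V" "V \<in> CH n (k + Suc d)" "V \<notin> CH n (k + d)"
        "logical_identity n A B V" unfolding Pj_def by auto
      obtain kk where kk: "k + d = Suc (Suc kk)" using k by (metis add_2_eq_Suc le_add_diff_inverse trans_le_add1)
      then have kk2: "k + Suc d = Suc (Suc (Suc kk))" by simp
      obtain V' where V': "one_local n V'" "V' \<in> CH n (Suc (Suc kk))" "V' \<notin> CH n (Suc kk)"
        "logical_identity n A B V'"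
        using step[OF css nonsplit dist V(1) _ _ V(4), of kk] V(2,3) kk kk2 by auto
      have "Pj (k + d)" unfolding Pj_def kk using V' by auto
      then show ?case by (rule Suc.IH)
    qed
    have U: "one_local n U" "U \<in> CH n m" "U \<notin> CH n (k - 1)" using hU by auto
    define j where "j = (LEAST j. U \<in> CH n j)"
    have Uj: "U \<in> CH n j" using U(2) unfolding j_def by (rule LeastI)
    have jm: "j \<le> m" using U(2) unfolding j_def by (rule Least_le)
    have j1: "1 \<le> j" using Uj by (cases j) auto
    have nj: "U \<notin> CH n (j - 1)"
    proof
      assume "U \<in> CH n (j - 1)"
      then have "j \<le> j - 1" unfolding j_def by (rule Least_le)
      then show False using j1 by simp
    qed
    have kj: "k \<le> j"
    proof (rule ccontr)
      assume "\<not> k \<le> j"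
      then have "j \<le> k - 1" by simp
      then have "U \<in> CH n (k - 1)" using CH_mono[OF j1] Uj by blast
      then show False using U(3) by blast
    qed
    have "Pj j" unfolding Pj_def using U(1) Uj nj liU by blast
    then have "Pj k" using down[of "j - k"] kj by simp
    then show False using hyp unfolding Pj_def by blast
  qed
qed

end
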